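(* Let $F$ be a Gårding–Dirichlet polynomial of degree $M$ on $\mathrm{Sym}^2(\mathbb{R}^n)$ with $I$-eigenvalues $\lambda^F(A)=(\lambda^F_1(A),\dots,\lambda^F_M(A))$, defined by $F(tI+A)=F(I)\prod_{j=1}^M(t+\lambda^F_j(A))$. Let $p$ be a universal G-D polynomial of degree $N$ in $M$ variables, with $e$-eigenvalues $\Lambda_1(\lambda),\dots,\Lambda_N(\lambda)$ defined by $p(te+\lambda)=p(e)\prod_{j=1}^N(t+\Lambda_j(\lambda))$, and Gårding cone $\Gamma_p$. Define $P_F(A)=p(\lambda^F(A))$ for $A\in\mathrm{Sym}^2(\mathbb{R}^n)$. Then $P_F$ is a Gårding–Dirichlet polynomial of degree $N$ on $\mathrm{Sym}^2(\mathbb{R}^n)$ whose $I$-eigenvalues are $\lambda^{P_F}_j(A)=\Lambda_j(\lambda^F(A))$, $j=1,\dots,N$, and whose Gårding cone is $\Gamma_{P_F}=(\lambda^F)^{-1}(\Gamma_p)$. Moreover, if $F$ is real invariant, so is $P_F$.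
   Context: $\mathrm{Sym}^2(\mathbb{R}^n)$ is the space of real symmetric $n\times n$ matrices. A Gårding–Dirichlet (G-D) polynomial of degree $N$ on $\mathrm{Sym}^2(\mathbb{R}^n)$ is a real homogeneous polynomial $F$ of degree $N$ with $F(I)>0$ such that for every $A$ the polynomial $t\mapsto F(tI+A)$ has only real roots, and whose Gårding cone $\Gamma$ — the connected component of $\{A: F(A)\ne 0\}$ containing $I$ — contains all positive definite matrices. Real invariant means $F(gAg^t)=F(A)$ for all $g\in O(n)$. A universal G-D polynomial in $M$ variables is a symmetric homogeneous real polynomial $p$ on $\mathbb{R}^M$ with $p(e)>0$ ($e=(1,\dots,1)$), all coefficients $\ge0$, $\partial p/\partial\lambda_j(e)=k>0$ independent of $j$, which is Gårding hyperbolic with respect to $e$ ($t\mapsto p(te+\lambda)$ has only real roots for all $\lambda$); its Gårding cone $\Gamma_p$ is the connected component of $\{p\neq0\}$ containing $e$. *)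

theory Defs
  imports "HOL-Analysis.Analysis" "HOL-Library.Poly_Mapping" "HOL-Computational_Algebra.Polynomial"
begin

text \<open>Multivariate real polynomials in explicit coefficient form: a finitely supported
  map from monomials (finitely supported exponent vectors) to real coefficients.\<close>

definition mpoly_eval :: "(('v \<Rightarrow>\<^sub>0 nat) \<Rightarrow>\<^sub>0 real) \<Rightarrow> ('v \<Rightarrow> real) \<Rightarrow> real" where
  "mpoly_eval c x = (\<Sum>m\<in>Poly_Mapping.keys c. Poly_Mapping.lookup c m * (\<Prod>v\<in>Poly_Mapping.keys m. x v ^ Poly_Mapping.lookup m v))"

definition homog_mpoly :: "nat \<Rightarrow> (('v \<Rightarrow>\<^sub>0 nat) \<Rightarrow>\<^sub>0 real) \<Rightarrow> bool" where
  "homog_mpoly N c \<longleftrightarrow> (\<forall>m\<in>Poly_Mapping.keys c. (\<Sum>v\<in>Poly_Mapping.keys m. Poly_Mapping.lookup m v) = N)"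

definition sym_mat :: "real^'n^'n \<Rightarrow> bool" where
  "sym_mat A \<longleftrightarrow> transpose A = A"

definition homog_poly_on_Sym :: "nat \<Rightarrow> (real^'n^'n \<Rightarrow> real) \<Rightarrow> bool" where
  "homog_poly_on_Sym N F \<longleftrightarrow>
     (\<exists>c. homog_mpoly N c \<and> (\<forall>A. sym_mat A \<longrightarrow> F A = mpoly_eval c (\<lambda>(i,j). A$i$j)))"

definition only_real_roots :: "real poly \<Rightarrow> bool" where
  "only_real_roots q \<longleftrightarrow> (\<forall>z. poly (map_poly complex_of_real q) z = 0 \<longrightarrow> z \<in> \<real>)"

definition pos_def :: "real^'n^'n \<Rightarrow> bool" where
  "pos_def A \<longleftrightarrow> sym_mat A \<and> (\<forall>x. x \<noteq> 0 \<longrightarrow> 0 < x \<bullet> (A *v x))"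

definition garding_cone :: "(real^'n^'n \<Rightarrow> real) \<Rightarrow> (real^'n^'n) set" where
  "garding_cone F = connected_component_set {A. sym_mat A \<and> F A \<noteq> 0} (mat 1)"

definition GD_poly :: "nat \<Rightarrow> (real^'n^'n \<Rightarrow> real) \<Rightarrow> bool" where
  "GD_poly N F \<longleftrightarrow>
     homog_poly_on_Sym N F \<and> F (mat 1) > 0 \<and>
     (\<forall>A q. sym_mat A \<and> (\<forall>t. poly q t = F (t *\<^sub>R mat 1 + A)) \<longrightarrow> only_real_roots q) \<and>
     (\<forall>A. pos_def A \<longrightarrow> A \<in> garding_cone F)"

definition real_invariant :: "(real^'n^'n \<Rightarrow> real) \<Rightarrow> bool" where
  "real_invariant F \<longleftrightarrow>
     (\<forall>g A. orthogonal_matrix g \<and> sym_mat A \<longrightarrow> F (g ** A ** transpose g) = F A)"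

text \<open>Universal G-D polynomial of degree N in the variables indexed by 'm (M = CARD('m)),
  with e = vec 1.\<close>
definition universal_GD :: "nat \<Rightarrow> (real^'m \<Rightarrow> real) \<Rightarrow> bool" where
  "universal_GD N p \<longleftrightarrow>
     (\<exists>c. homog_mpoly N c \<and> (\<forall>m. Poly_Mapping.lookup c m \<ge> 0) \<and> (\<forall>x. p x = mpoly_eval c (\<lambda>i. x $ i))) \<and>
     (\<forall>\<sigma> x. \<sigma> permutes (UNIV :: 'm set) \<longrightarrow> p (\<chi> i. x $ \<sigma> i) = p x) \<and>
     p (vec 1) > 0 \<and>
     (\<exists>k>0. \<forall>j. ((\<lambda>t. p (vec 1 + t *\<^sub>R axis j 1)) has_real_derivative k) (at 0)) \<and>
     (\<forall>x q. (\<forall>t. poly q t = p (t *\<^sub>R vec 1 + x)) \<longrightarrow> only_real_roots q)"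

definition garding_cone_vec :: "(real^'m \<Rightarrow> real) \<Rightarrow> (real^'m) set" where
  "garding_cone_vec p = connected_component_set {x. p x \<noteq> 0} (vec 1)"

end

theory Submission
  imports Defs
begin


definition mon :: "('v \<Rightarrow>\<^sub>0 nat) \<Rightarrow> ('v \<Rightarrow> real) \<Rightarrow> real" where
  "mon m x = (\<Prod>v\<in>Poly_Mapping.keys m. x v ^ Poly_Mapping.lookup m v)"

lemma mpoly_eval_mon: "mpoly_eval c x = (\<Sum>m\<in>Poly_Mapping.keys c. Poly_Mapping.lookup c m * mon m x)"
  by (simp add: mpoly_eval_def mon_def)

lemma mon_superset: "finite S \<Longrightarrow> Poly_Mapping.keys m \<subseteq> S \<Longrightarrow>
   mon m x = (\<Prod>v\<in>S. x v ^ Poly_Mapping.lookup m v)"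
  unfolding mon_def
  by (rule prod.mono_neutral_left) (auto simp: in_keys_iff)

lemma mpoly_eval_superset: "finite S \<Longrightarrow> Poly_Mapping.keys c \<subseteq> S \<Longrightarrow>
   mpoly_eval c x = (\<Sum>m\<in>S. Poly_Mapping.lookup c m * mon m x)"
  unfolding mpoly_eval_mon
  by (rule sum.mono_neutral_left) (auto simp: in_keys_iff)

lemma mpoly_eval_add: "mpoly_eval (a + b) x = mpoly_eval a x + mpoly_eval b x"
proof -
  define S where "S = Poly_Mapping.keys a \<union> Poly_Mapping.keys b"
  have f: "finite S" by (simp add: S_def)
  have k: "Poly_Mapping.keys (a+b) \<subseteq> S" unfolding S_def by (rule keys_add)
  have ka: "Poly_Mapping.keys a \<subseteq> S" and kb: "Poly_Mapping.keys b \<subseteq> S" unfolding S_def by auto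
  have "mpoly_eval (a + b) x = (\<Sum>m\<in>S. Poly_Mapping.lookup (a+b) m * mon m x)"
    by (rule mpoly_eval_superset[OF f k])
  also have "\<dots> = (\<Sum>m\<in>S. Poly_Mapping.lookup a m * mon m x + Poly_Mapping.lookup b m * mon m x)"
    by (rule sum.cong) (auto simp: lookup_add distrib_right)
  also have "\<dots> = (\<Sum>m\<in>S. Poly_Mapping.lookup a m * mon m x) + (\<Sum>m\<in>S. Poly_Mapping.lookup b m * mon m x)"
    by (rule sum.distrib)
  also have "\<dots> = mpoly_eval a x + mpoly_eval b x"
    using mpoly_eval_superset[OF f ka] mpoly_eval_superset[OF f kb] by simp
  finally show ?thesis .
qed

lemma mpoly_eval_zero: "mpoly_eval 0 x = 0"
  by (simp add: mpoly_eval_def)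

lemma mpoly_eval_sum: "mpoly_eval (\<Sum>i\<in>I. c i) x = (\<Sum>i\<in>I. mpoly_eval (c i) x)"
  by (induction I rule: infinite_finite_induct) (auto simp: mpoly_eval_zero mpoly_eval_add)

lemma mpoly_eval_single: "mpoly_eval (Poly_Mapping.single m a) x = a * mon m x"
  by (subst mpoly_eval_superset[of "{m}"]) (auto simp: lookup_single)

lemma mon_add: "mon (m1 + m2) x = mon m1 x * mon m2 x"
proof -
  define S where "S = Poly_Mapping.keys m1 \<union> Poly_Mapping.keys m2"
  have f: "finite S" by (simp add: S_def)
  have k: "Poly_Mapping.keys (m1+m2) \<subseteq> S" unfolding S_def by (rule keys_add)
  have ka: "Poly_Mapping.keys m1 \<subseteq> S" and kb: "Poly_Mapping.keys m2 \<subseteq> S" unfolding S_def by auto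
  have "mon (m1 + m2) x = (\<Prod>v\<in>S. x v ^ Poly_Mapping.lookup (m1+m2) v)"
    by (rule mon_superset[OF f k])
  also have "\<dots> = (\<Prod>v\<in>S. x v ^ Poly_Mapping.lookup m1 v * x v ^ Poly_Mapping.lookup m2 v)"
    by (rule prod.cong) (auto simp: lookup_add power_add)
  also have "\<dots> = (\<Prod>v\<in>S. x v ^ Poly_Mapping.lookup m1 v) * (\<Prod>v\<in>S. x v ^ Poly_Mapping.lookup m2 v)"
    by (rule prod.distrib)
  also have "\<dots> = mon m1 x * mon m2 x" using mon_superset[OF f ka] mon_superset[OF f kb] by simp
  finally show ?thesis .
qed

lemma mon_zero: "mon 0 x = 1" by (simp add: mon_def)

lemma mon_var: "mon (Poly_Mapping.single v 1) x = x v"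
  by (subst mon_superset[of "{v}"]) (auto simp: lookup_single)

lemma mon_var': "mon (Poly_Mapping.single v (Suc 0)) x = x v"
  using mon_var[of v x] by simp

inductive pf :: "(('v \<Rightarrow> real) \<Rightarrow> real) \<Rightarrow> bool" where
  pf_const: "pf (\<lambda>x. c)"
| pf_var: "pf (\<lambda>x. x v)"
| pf_add: "pf f \<Longrightarrow> pf g \<Longrightarrow> pf (\<lambda>x. f x + g x)"
| pf_mult: "pf f \<Longrightarrow> pf g \<Longrightarrow> pf (\<lambda>x. f x * g x)"

lemma pf_sum: "(\<And>i. i \<in> I \<Longrightarrow> pf (f i)) \<Longrightarrow> pf (\<lambda>x. \<Sum>i\<in>I. f i x)"
proof (induction I rule: infinite_finite_induct)
  case (infinite A) then show ?case by (simp add: pf_const)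
next
  case empty then show ?case by (simp add: pf_const)
next
  case (insert a A) then show ?case by (simp add: pf_add)
qed

lemma pf_prod: "(\<And>i. i \<in> I \<Longrightarrow> pf (f i)) \<Longrightarrow> pf (\<lambda>x. \<Prod>i\<in>I. f i x)"
proof (induction I rule: infinite_finite_induct)
  case (infinite A) then show ?case by (simp add: pf_const)
next
  case empty then show ?case by (simp add: pf_const)
next
  case (insert a A) then show ?case by (simp add: pf_mult)
qed

lemma pf_pow: "pf f \<Longrightarrow> pf (\<lambda>x. f x ^ n)"
  by (induction n) (simp_all add: pf_const pf_mult)

lemma pf_cong: "pf f \<Longrightarrow> (\<And>x. f x = g x) \<Longrightarrow> pf g"
proof -
  assume "pf f" "\<And>x. f x = g x"
  then have "f = g" by auto
  with \<open>pf f\<close> show ?thesis by simp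
qed

lemma pf_diff: "pf f \<Longrightarrow> pf g \<Longrightarrow> pf (\<lambda>x. f x - g x)"
proof -
  assume "pf f" "pf g"
  have "pf (\<lambda>x. (-1::real) * g x)" by (rule pf_mult[OF pf_const \<open>pf g\<close>])
  then have "pf (\<lambda>x. f x + (-1) * g x)" by (rule pf_add[OF \<open>pf f\<close>])
  then show ?thesis using pf_cong[of "\<lambda>x. f x + (-1) * g x" "\<lambda>x. f x - g x"] by simp
qed

lemma pf_if: "pf f \<Longrightarrow> pf g \<Longrightarrow> pf (\<lambda>x. if P then f x else g x)"
  by (cases P) auto

lemma pf_subst: "pf f \<Longrightarrow> (\<And>w. pf (g w)) \<Longrightarrow> pf (\<lambda>x. f (\<lambda>w. g w x))"
  by (induction f rule: pf.induct) (simp_all add: pf_add pf_mult pf_const)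

lemma pf_mpoly: "pf (mpoly_eval c)"
  unfolding mpoly_eval_def
  by (intro pf_sum pf_mult pf_const pf_prod pf_pow pf_var)

lemma pf_mpoly_subst: "(\<And>w. pf (g w)) \<Longrightarrow> pf (\<lambda>x. mpoly_eval c (\<lambda>w. g w x))"
  by (rule pf_subst[OF pf_mpoly])

lemma pf_to_mpoly: "pf f \<Longrightarrow> \<exists>c. \<forall>x. f x = mpoly_eval c x"
proof (induction f rule: pf.induct)
  case (pf_const a)
  show ?case by (rule exI[of _ "Poly_Mapping.single 0 a"]) (simp add: mpoly_eval_single mon_zero)
next
  case (pf_var v)
  show ?case by (rule exI[of _ "Poly_Mapping.single (Poly_Mapping.single v 1) 1"]) (simp add: mpoly_eval_single mon_var')
next
  case (pf_add f g)
  then obtain a b where "\<forall>x. f x = mpoly_eval a x" "\<forall>x. g x = mpoly_eval b x" by blast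
  then show ?case by (intro exI[of _ "a+b"]) (simp add: mpoly_eval_add)
next
  case (pf_mult f g)
  then obtain a b where ab: "\<forall>x. f x = mpoly_eval a x" "\<forall>x. g x = mpoly_eval b x" by blast
  let ?c = "\<Sum>p\<in>Poly_Mapping.keys a \<times> Poly_Mapping.keys b.
      Poly_Mapping.single (fst p + snd p) (Poly_Mapping.lookup a (fst p) * Poly_Mapping.lookup b (snd p))"
  have "f x * g x = mpoly_eval ?c x" for x
  proof -
    have "mpoly_eval ?c x = (\<Sum>p\<in>Poly_Mapping.keys a \<times> Poly_Mapping.keys b.
        (Poly_Mapping.lookup a (fst p) * mon (fst p) x) * (Poly_Mapping.lookup b (snd p) * mon (snd p) x))"
      by (simp add: mpoly_eval_sum mpoly_eval_single mon_add mult_ac)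
    also have "\<dots> = mpoly_eval a x * mpoly_eval b x"
      by (simp add: mpoly_eval_mon sum_product sum.cartesian_product case_prod_beta)
    finally show ?thesis using ab by simp
  qed
  then show ?case by blast
qed

lemma pf_line: "pf f \<Longrightarrow> \<exists>q. \<forall>t. f (\<lambda>v. x v + t * w v) = poly q t"
proof (induction f rule: pf.induct)
  case (pf_const c)
  show ?case by (rule exI[of _ "[:c:]"]) simp
next
  case (pf_var v)
  show ?case by (rule exI[of _ "[:x v, w v:]"]) (simp add: mult.commute)
next
  case (pf_add f g)
  then obtain q r where "\<forall>t. f (\<lambda>v. x v + t * w v) = poly q t" "\<forall>t. g (\<lambda>v. x v + t * w v) = poly r t" by blast
  then show ?case by (intro exI[of _ "q+r"]) simp
next
  case (pf_mult f g)
  then obtain q r where "\<forall>t. f (\<lambda>v. x v + t * w v) = poly q t" "\<forall>t. g (\<lambda>v. x v + t * w v) = poly r t" by blast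
  then show ?case by (intro exI[of _ "q*r"]) simp
qed

lemma coeff_unique:
  assumes "\<forall>y::real. (\<Sum>k\<le>d. c k * y ^ k) = (\<Sum>k\<le>d. c' k * y ^ k)" "k \<le> d"
  shows "c k = c' k"
proof -
  let ?P = "\<Sum>k\<le>d. monom (c k) k" and ?Q = "\<Sum>k\<le>d. monom (c' k) k"
  have "poly ?P = poly ?Q" using assms(1) by (auto simp: poly_sum poly_monom)
  then have "?P = ?Q" by (simp add: poly_eq_poly_eq_iff)
  then have "coeff ?P k = coeff ?Q k" by simp
  then show ?thesis using assms(2) by (simp add: coeff_sum coeff_monom)
qed


lemma sum_pad: "(d::nat) \<le> D \<Longrightarrow> (\<Sum>k\<le>d. g k) = (\<Sum>k\<le>D. if k \<le> d then g k else 0)"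
proof -
  assume "d \<le> D"
  have "(\<Sum>k\<le>D. if k \<le> d then g k else 0) = (\<Sum>k\<le>d. if k \<le> d then g k else 0)"
    using \<open>d \<le> D\<close> by (intro sum.mono_neutral_right) auto
  then show ?thesis by simp
qed

definition indep :: "'v \<Rightarrow> (('v \<Rightarrow> real) \<Rightarrow> real) \<Rightarrow> bool" where
  "indep v f \<longleftrightarrow> (\<forall>x y. f (x(v:=y)) = f x)"

lemma pf_decomp0: "pf f \<Longrightarrow> \<exists>d a. (\<forall>k. pf (a k) \<and> indep v (a k)) \<and> (\<forall>x. f x = (\<Sum>k\<le>d. a k x * x v ^ k))"
proof (induction f rule: pf.induct)
  case (pf_const c)
  show ?case by (rule exI[of _ 0], rule exI[of _ "\<lambda>k x. c"]) (simp add: pf.pf_const indep_def)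
next
  case (pf_var u)
  show ?case
  proof (cases "u = v")
    case True
    show ?thesis
      by (rule exI[of _ 1], rule exI[of _ "\<lambda>k x. if k = 1 then 1 else 0"])
        (auto simp: pf.pf_const indep_def True)
  next
    case False
    show ?thesis
      by (rule exI[of _ 0], rule exI[of _ "\<lambda>k x. x u"]) (use False in \<open>auto simp: pf.pf_var indep_def\<close>)
  qed
next
  case (pf_add f g)
  from pf_add.IH(1) obtain d1 a1 where A1: "\<forall>k. pf (a1 k) \<and> indep v (a1 k)" "\<forall>x. f x = (\<Sum>k\<le>d1. a1 k x * x v ^ k)" by blast
  from pf_add.IH(2) obtain d2 a2 where A2: "\<forall>k. pf (a2 k) \<and> indep v (a2 k)" "\<forall>x. g x = (\<Sum>k\<le>d2. a2 k x * x v ^ k)" by blast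
  note A = A1 A2
  define D where "D = max d1 d2"
  define a where "a k x = (if k \<le> d1 then a1 k x else 0) + (if k \<le> d2 then a2 k x else 0)" for k x
  have "\<forall>k. pf (a k) \<and> indep v (a k)"
  proof
    fix k
    have "pf (\<lambda>x. (if k \<le> d1 then a1 k x else 0) + (if k \<le> d2 then a2 k x else 0))"
      using A by (intro pf.pf_add pf_if pf.pf_const) auto
    moreover have "indep v (a k)" using A unfolding a_def indep_def by auto
    ultimately show "pf (a k) \<and> indep v (a k)" unfolding a_def by simp
  qed
  moreover have "f x + g x = (\<Sum>k\<le>D. a k x * x v ^ k)" for x
  proof -
    have "f x = (\<Sum>k\<le>D. if k \<le> d1 then a1 k x * x v ^ k else 0)"
      using A(2) sum_pad[of d1 D] by (simp add: D_def)
    moreover have "g x = (\<Sum>k\<le>D. if k \<le> d2 then a2 k x * x v ^ k else 0)"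
      using A(4) sum_pad[of d2 D] by (simp add: D_def)
    ultimately have "f x + g x = (\<Sum>k\<le>D. (if k \<le> d1 then a1 k x * x v ^ k else 0) + (if k \<le> d2 then a2 k x * x v ^ k else 0))"
      by (simp only: sum.distrib)
    also have "\<dots> = (\<Sum>k\<le>D. a k x * x v ^ k)"
      by (rule sum.cong) (auto simp: a_def distrib_right)
    finally show ?thesis .
  qed
  ultimately show ?case by blast
next
  case (pf_mult f g)
  from pf_mult.IH(1) obtain d1 a1 where A1: "\<forall>k. pf (a1 k) \<and> indep v (a1 k)" "\<forall>x. f x = (\<Sum>k\<le>d1. a1 k x * x v ^ k)" by blast
  from pf_mult.IH(2) obtain d2 a2 where A2: "\<forall>k. pf (a2 k) \<and> indep v (a2 k)" "\<forall>x. g x = (\<Sum>k\<le>d2. a2 k x * x v ^ k)" by blast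
  note A = A1 A2
  define a where "a k x = (\<Sum>i\<le>d1. \<Sum>j\<le>d2. if i + j = k then a1 i x * a2 j x else 0)" for k x
  have "\<forall>k. pf (a k) \<and> indep v (a k)"
  proof
    fix k
    have "pf (\<lambda>x. \<Sum>i\<le>d1. \<Sum>j\<le>d2. if i + j = k then a1 i x * a2 j x else 0)"
      using A by (intro pf_sum pf_if pf.pf_mult pf.pf_const) auto
    moreover have "indep v (a k)"
    proof -
      have I1: "\<And>i x y. a1 i (x(v:=y)) = a1 i x" using A1(1) by (simp add: indep_def)
      have I2: "\<And>i x y. a2 i (x(v:=y)) = a2 i x" using A2(1) by (simp add: indep_def)
      show ?thesis unfolding a_def indep_def I1 I2 by simp
    qed
    ultimately show "pf (a k) \<and> indep v (a k)" unfolding a_def by simp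
  qed
  moreover have "f x * g x = (\<Sum>k\<le>d1+d2. a k x * x v ^ k)" for x
  proof -
    have "(\<Sum>k\<le>d1+d2. a k x * x v ^ k) = (\<Sum>k\<le>d1+d2. \<Sum>i\<le>d1. \<Sum>j\<le>d2. if i + j = k then a1 i x * a2 j x * x v ^ (i+j) else 0)"
      unfolding a_def sum_distrib_right by (intro sum.cong refl) auto
    also have "\<dots> = (\<Sum>i\<le>d1. \<Sum>k\<le>d1+d2. \<Sum>j\<le>d2. if i + j = k then a1 i x * a2 j x * x v ^ (i+j) else 0)"
      by (rule sum.swap)
    also have "\<dots> = (\<Sum>i\<le>d1. \<Sum>j\<le>d2. \<Sum>k\<le>d1+d2. if i + j = k then a1 i x * a2 j x * x v ^ (i+j) else 0)"
      by (rule sum.cong[OF refl], rule sum.swap)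
    also have "\<dots> = (\<Sum>i\<le>d1. \<Sum>j\<le>d2. a1 i x * a2 j x * x v ^ (i+j))"
    proof (rule sum.cong[OF refl], rule sum.cong[OF refl])
      fix i j assume "i \<in> {..d1}" "j \<in> {..d2}"
      then have "i + j \<in> {..d1+d2}" by auto
      then show "(\<Sum>k\<le>d1+d2. if i + j = k then a1 i x * a2 j x * x v ^ (i+j) else 0) = a1 i x * a2 j x * x v ^ (i+j)"
        by (simp add: sum.delta)
    qed
    also have "\<dots> = f x * g x"
      using A by (simp add: sum_product power_add mult_ac)
    finally show ?thesis by simp
  qed
  ultimately show ?case by blast
qed

lemma pf_decomp: "pf f \<Longrightarrow> \<exists>d a. (\<forall>k. pf (a k) \<and> indep v (a k)) \<and> (\<forall>k>d. a k = (\<lambda>x. 0)) \<and>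
   (\<forall>x. f x = (\<Sum>k\<le>d. a k x * x v ^ k))"
proof -
  assume "pf f"
  from pf_decomp0[OF this, of v] obtain d a where A: "\<forall>k. pf (a k) \<and> indep v (a k)" "\<forall>x. f x = (\<Sum>k\<le>d. a k x * x v ^ k)"
    by blast
  define a' where "a' k = (if k \<le> d then a k else (\<lambda>x. 0))" for k
  have "\<forall>k. pf (a' k) \<and> indep v (a' k)" using A by (auto simp: a'_def indep_def pf.pf_const)
  moreover have "\<forall>k>d. a' k = (\<lambda>x. 0)" by (simp add: a'_def)
  moreover have "\<forall>x. f x = (\<Sum>k\<le>d. a' k x * x v ^ k)" using A by (simp add: a'_def)
  ultimately show ?thesis by blast
qed

definition dep :: "'v set \<Rightarrow> (('v \<Rightarrow> real) \<Rightarrow> real) \<Rightarrow> bool" where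
  "dep V f \<longleftrightarrow> (\<forall>x y. (\<forall>u\<in>V. x u = y u) \<longrightarrow> f x = f y)"

lemma decomp_coeff_eq:
  assumes f: "\<forall>x. f x = (\<Sum>k\<le>d. a k x * x v ^ k)" and ind: "\<forall>k. indep v (a k)"
    and z: "\<forall>z. f (x(v:=z)) = f (y(v:=z))" and "k \<le> d"
  shows "a k x = a k y"
proof -
  have "\<forall>z. (\<Sum>k\<le>d. a k x * z ^ k) = (\<Sum>k\<le>d. a k y * z ^ k)"
  proof
    fix z
    have "f (x(v:=z)) = (\<Sum>k\<le>d. a k x * z ^ k)" using f ind by (simp add: indep_def)
    moreover have "f (y(v:=z)) = (\<Sum>k\<le>d. a k y * z ^ k)" using f ind by (simp add: indep_def)
    ultimately show "(\<Sum>k\<le>d. a k x * z ^ k) = (\<Sum>k\<le>d. a k y * z ^ k)" using z by simp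
  qed
  from coeff_unique[OF this \<open>k \<le> d\<close>] show ?thesis .
qed

lemma decomp_dep:
  assumes f: "\<forall>x. f x = (\<Sum>k\<le>d. a k x * x v ^ k)" and ind: "\<forall>k. indep v (a k)"
    and z: "\<forall>k>d. a k = (\<lambda>x. 0)" and "dep V f"
  shows "dep (V - {v}) (a k)"
  unfolding dep_def
proof (intro allI impI)
  fix x y :: "'a \<Rightarrow> real" assume xy: "\<forall>u\<in>V - {v}. x u = y u"
  show "a k x = a k y"
  proof (cases "k \<le> d")
    case True
    have "\<forall>z. f (x(v:=z)) = f (y(v:=z))"
      using \<open>dep V f\<close> xy unfolding dep_def by auto
    from decomp_coeff_eq[OF f ind this True] show ?thesis .
  next
    case False then show ?thesis using z by simp
  qed
qed

lemma decomp_sym: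
  assumes f: "\<forall>x. f x = (\<Sum>k\<le>d. a k x * x v ^ k)" and ind: "\<forall>k. indep v (a k)"
    and z: "\<forall>k>d. a k = (\<lambda>x. 0)" and sym: "\<forall>x. f (x \<circ> \<sigma>) = f x" and sv: "\<forall>u. \<sigma> u = v \<longleftrightarrow> u = v"
  shows "a k (x \<circ> \<sigma>) = a k x"
proof (cases "k \<le> d")
  case True
  have "\<forall>z. f ((x \<circ> \<sigma>)(v:=z)) = f (x(v:=z))"
  proof
    fix z
    have "(x \<circ> \<sigma>)(v:=z) = (x(v:=z)) \<circ> \<sigma>" using sv by (auto simp: fun_eq_iff)
    then show "f ((x \<circ> \<sigma>)(v:=z)) = f (x(v:=z))" using sym by simp
  qed
  from decomp_coeff_eq[OF f ind this True] show ?thesis .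
next
  case False then show ?thesis using z by simp
qed


definition Ep :: "'v set \<Rightarrow> ('v \<Rightarrow> real) \<Rightarrow> real poly" where
  "Ep V x = (\<Prod>j\<in>V. [:x j, 1:])"

definition E :: "'v set \<Rightarrow> ('v \<Rightarrow> real) \<Rightarrow> nat \<Rightarrow> real" where
  "E V x i = coeff (Ep V x) i"

lemma E_empty: "E {} x i = (if i = 0 then 1 else 0)"
  by (simp add: E_def Ep_def coeff_1)

lemma E_insert: "finite V \<Longrightarrow> a \<notin> V \<Longrightarrow>
    E (insert a V) x i = x a * E V x i + (if i = 0 then 0 else E V x (i - 1))"
proof -
  assume "finite V" "a \<notin> V"
  then have "Ep (insert a V) x = [:x a, 1:] * Ep V x" by (simp add: Ep_def)
  also have "\<dots> = smult (x a) (Ep V x) + pCons 0 (Ep V x)" by (simp add: mult_pCons_left)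
  finally show ?thesis by (cases i) (simp_all add: E_def)
qed

lemma pf_E: "finite V \<Longrightarrow> pf (\<lambda>x. E V x i)"
proof (induction V arbitrary: i rule: finite_induct)
  case empty then show ?case by (simp add: E_empty pf_const)
next
  case (insert a V)
  have "pf (\<lambda>x. x a * E V x i + (if i = 0 then 0 else E V x (i - 1)))"
    using insert by (intro pf_add pf_mult pf_var pf_if pf_const) auto
  then show ?case using insert by (simp add: E_insert)
qed

lemma E_top: "finite V \<Longrightarrow> E V x (card V) = 1 \<and> (\<forall>i>card V. E V x i = 0)"
proof (induction V rule: finite_induct)
  case empty then show ?case by (simp add: E_empty)
next
  case (insert a V)
  then show ?case by (auto simp: E_insert)
qed

lemma poly_Ep: "poly (Ep V x) t = (\<Prod>j\<in>V. t + x j)"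
  by (simp add: Ep_def poly_prod add.commute)

lemma E_sum: "finite V \<Longrightarrow> (\<Sum>i\<le>card V. E V x i * t ^ i) = (\<Prod>j\<in>V. t + x j)"
proof -
  assume fin: "finite V"
  have d: "degree (Ep V x) \<le> card V"
    using E_top[OF fin, of x] by (intro degree_le) (auto simp: E_def)
  have "poly (Ep V x) t = (\<Sum>i\<le>degree (Ep V x). coeff (Ep V x) i * t ^ i)" by (rule poly_altdef)
  also have "\<dots> = (\<Sum>i\<le>card V. if i \<le> degree (Ep V x) then coeff (Ep V x) i * t ^ i else 0)"
    by (rule sum_pad[OF d])
  also have "\<dots> = (\<Sum>i\<le>card V. E V x i * t ^ i)"
    by (rule sum.cong) (auto simp: E_def coeff_eq_0)
  finally show ?thesis by (simp add: poly_Ep)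
qed

lemma E_root: "finite V \<Longrightarrow> j \<in> V \<Longrightarrow> (\<Sum>i\<le>card V. E V x i * (- x j) ^ i) = 0"
  by (simp add: E_sum prod_zero_iff) (rule bexI[of _ j], auto)

lemma E_perm: "bij_betw \<sigma> V V \<Longrightarrow> E V (x \<circ> \<sigma>) i = E V x i"
proof -
  assume b: "bij_betw \<sigma> V V"
  have "Ep V (x \<circ> \<sigma>) = (\<Prod>j\<in>V. (\<lambda>j. [:x j, 1:]) (\<sigma> j))" by (simp add: Ep_def)
  also have "\<dots> = Ep V x" unfolding Ep_def by (rule prod.reindex_bij_betw[OF b])
  finally show ?thesis by (simp add: E_def)
qed

lemma E_eq_prod: "(\<forall>t. (\<Prod>j\<in>V. t + x j) = (\<Prod>j\<in>V. t + y j)) \<Longrightarrow> E V x i = E V y i"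
proof -
  assume "\<forall>t. (\<Prod>j\<in>V. t + x j) = (\<Prod>j\<in>V. t + y j)"
  then have "poly (Ep V x) = poly (Ep V y)" by (auto simp: poly_Ep)
  then have "Ep V x = Ep V y" by (simp add: poly_eq_poly_eq_iff)
  then show ?thesis by (simp add: E_def)
qed

lemma E_div_aux: "finite V \<Longrightarrow> v \<notin> V \<Longrightarrow>
   E V x i = (\<Sum>l<n. (- x v) ^ l * E (insert v V) x (i + 1 + l)) + (- x v) ^ n * E V x (i + n)"
proof (induction n)
  case 0 then show ?case by simp
next
  case (Suc n)
  have "E (insert v V) x (i + 1 + n) = x v * E V x (i + 1 + n) + E V x (i + n)"
    using Suc.prems by (simp add: E_insert)
  then have "(- x v) ^ n * E V x (i + n) = (- x v) ^ n * E (insert v V) x (i + 1 + n) + (- x v) ^ Suc n * E V x (i + Suc n)"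
    by (simp add: algebra_simps)
  then show ?case using Suc by simp
qed

lemma E_div: "finite V \<Longrightarrow> v \<notin> V \<Longrightarrow>
   E V x i = (\<Sum>l<card V + 1. (- x v) ^ l * E (insert v V) x (i + 1 + l))"
  using E_div_aux[of V v x i "card V + 1"] E_top[of V x] by simp

fun bb :: "nat \<Rightarrow> nat \<Rightarrow> nat \<Rightarrow> (nat \<Rightarrow> real) \<Rightarrow> real" where
  "bb M 0 i e = (if i = 0 then 1 else 0)"
| "bb M (Suc k) i e = (if i = 0 then 0 else bb M k (i - 1) e) + bb M k (M - 1) e * (- ((-1) ^ (M + i)) * e i)"

lemma pf_bb: "pf (bb M k i)"
proof (induction k arbitrary: i)
  case 0 then show ?case by (simp add: pf_const)
next
  case (Suc k)
  have "pf (\<lambda>e. (if i = 0 then 0 else bb M k (i - 1) e) + bb M k (M - 1) e * (- ((-1) ^ (M + i)) * e i))"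
    using Suc by (intro pf_add pf_if pf_mult pf_const pf_var) auto
  then show ?case by simp
qed

lemma neg_pow_aux: "(-1::real) ^ n * (- y) ^ n = y ^ n"
  by (induction n) (simp_all add: algebra_simps)

lemma bb_red:
  fixes y :: real
  assumes M: "M = Suc m" and eM: "e M = 1" and root: "(\<Sum>i\<le>M. e i * (- y) ^ i) = 0"
  shows "y ^ k = (\<Sum>i<M. bb M k i e * y ^ i)"
proof -
  have sp: "(\<Sum>i\<le>M. e i * (- y) ^ i) = (\<Sum>i<M. e i * (- y) ^ i) + e M * (- y) ^ M"
    unfolding M lessThan_Suc_atMost by (rule sum.atMost_Suc)
  have "(\<Sum>i<M. e i * (- y) ^ i) + (- y) ^ M = 0"
    using root eM sp by simp
  then have "(-1) ^ M * ((\<Sum>i<M. e i * (- y) ^ i) + (- y) ^ M) = 0" by simp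
  then have "(\<Sum>i<M. (-1) ^ M * (e i * (- y) ^ i)) + ((-1) ^ M * (- y) ^ M) = 0"
    by (simp only: distrib_left sum_distrib_left)
  moreover have "(-1) ^ M * (- y) ^ M = y ^ M"
    by (rule neg_pow_aux)
  moreover have "(-1) ^ M * (e i * (- y) ^ i) = (-1) ^ (M + i) * e i * y ^ i" for i
  proof -
    have "(- y) ^ i = (-1) ^ i * y ^ i" by (rule power_minus)
    then show ?thesis by (simp add: power_add mult_ac)
  qed
  ultimately have "(\<Sum>i<M. (-1) ^ (M + i) * e i * y ^ i) + y ^ M = 0" by simp
  then have "y ^ M = - (\<Sum>i<M. (-1) ^ (M + i) * e i * y ^ i)" by linarith
  also have "\<dots> = (\<Sum>i<M. (- ((-1) ^ (M + i)) * e i) * y ^ i)"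
    by (simp add: sum_negf[symmetric])
  finally have yM: "y ^ M = (\<Sum>i<M. (- ((-1) ^ (M + i)) * e i) * y ^ i)" .
  show ?thesis
  proof (induction k)
    case 0
    have "(\<Sum>i<M. bb M 0 i e * y ^ i) = (\<Sum>i<M. if i = 0 then y ^ i else 0)"
      by (rule sum.cong) auto
    also have "\<dots> = 1" by (simp add: sum.delta M)
    finally show ?case by simp
  next
    case (Suc k)
    have "y ^ Suc k = y * (\<Sum>i<M. bb M k i e * y ^ i)" using Suc by simp
    also have "\<dots> = (\<Sum>i<m. bb M k i e * y ^ Suc i) + bb M k m e * y ^ M"
      by (simp add: M sum_distrib_left distrib_left mult_ac)
    also have "\<dots> = (\<Sum>i<m. bb M k i e * y ^ Suc i) + (\<Sum>i<M. bb M k m e * ((- ((-1) ^ (M + i)) * e i) * y ^ i))"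
      by (simp only: yM sum_distrib_left)
    also have "(\<Sum>i<m. bb M k i e * y ^ Suc i) = (\<Sum>i<M. (if i = 0 then 0 else bb M k (i - 1) e) * y ^ i)"
    proof -
      have "(\<Sum>i<Suc m. (if i = 0 then 0 else bb M k (i - 1) e) * y ^ i) =
          (if 0 = (0::nat) then 0 else bb M k (0 - 1) e) * y ^ 0 + (\<Sum>i<m. (if Suc i = 0 then 0 else bb M k (Suc i - 1) e) * y ^ Suc i)"
        by (rule sum.lessThan_Suc_shift)
      then show ?thesis unfolding M by simp
    qed
    finally have "y ^ Suc k = (\<Sum>i<M. (if i = 0 then 0 else bb M k (i - 1) e) * y ^ i + bb M k m e * ((- ((-1) ^ (M + i)) * e i) * y ^ i))"
      by (simp only: sum.distrib)
    moreover have "M - 1 = m" using M by simp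
    then have "(\<Sum>i<M. (if i = 0 then 0 else bb M k (i - 1) e) * y ^ i + bb M k m e * ((- ((-1) ^ (M + i)) * e i) * y ^ i))
       = (\<Sum>i<M. bb M (Suc k) i e * y ^ i)"
      by (intro sum.cong refl) (simp only: bb.simps distrib_right mult.assoc)
    ultimately show ?case by simp
  qed
qed


definition sw :: "'v \<Rightarrow> 'v \<Rightarrow> 'v \<Rightarrow> 'v" where
  "sw i j u = (if u = i then j else if u = j then i else u)"

lemma sw_bij: "i \<in> V \<Longrightarrow> j \<in> V \<Longrightarrow> bij_betw (sw i j) V V"
  unfolding bij_betw_def inj_on_def sw_def by (auto simp: image_iff)

lemma pf_neg: "pf f \<Longrightarrow> pf (\<lambda>x. - f x)"
  using pf_diff[OF pf_const, of f 0] by simp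

lemma inj_line_finite:
  fixes x w :: "'v \<Rightarrow> real"
  assumes "finite V" "inj_on w V"
  shows "\<exists>B. finite B \<and> (\<forall>t. t \<notin> B \<longrightarrow> inj_on (\<lambda>u. x u + t * w u) V)"
proof -
  define B where "B = (\<lambda>(u1,u2). (x u2 - x u1) / (w u1 - w u2)) ` (V \<times> V)"
  have "finite B" using assms by (simp add: B_def)
  moreover have "inj_on (\<lambda>u. x u + t * w u) V" if "t \<notin> B" for t
  proof (rule inj_onI, rule ccontr)
    fix u1 u2 assume u: "u1 \<in> V" "u2 \<in> V" "x u1 + t * w u1 = x u2 + t * w u2" "u1 \<noteq> u2"
    then have "w u1 \<noteq> w u2" using assms(2) by (auto dest: inj_onD)
    then have "t = (x u2 - x u1) / (w u1 - w u2)" using u(3) by (simp add: field_simps)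
    then have "t \<in> B" using u by (auto simp: B_def)
    then show False using that by simp
  qed
  ultimately show ?thesis by blast
qed

lemma ftsp:
  fixes p :: "('v \<Rightarrow> real) \<Rightarrow> real"
  assumes "finite V" "pf p" "dep V p" "\<forall>i\<in>V. \<forall>j\<in>V. \<forall>x. p (x \<circ> sw i j) = p x"
  shows "\<exists>Q. pf Q \<and> (\<forall>x. p x = Q (E V x))"
  using assms
proof (induction V arbitrary: p rule: finite_induct)
  case empty
  have "p x = p (\<lambda>_. 0)" for x using empty.prems(2) by (simp add: dep_def)
  then show ?case by (intro exI[of _ "\<lambda>_. p (\<lambda>_. 0)"]) (simp add: pf_const)
next
  case (insert v V)
  define V' where "V' = insert v V"
  define M where "M = card V'"
  have finV': "finite V'" using insert by (simp add: V'_def)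
  have M: "M = Suc (card V)" using insert by (simp add: M_def V'_def)
  from pf_decomp[OF insert.prems(1), of v] obtain d a where
    A: "\<forall>k. pf (a k) \<and> indep v (a k)" "\<forall>k>d. a k = (\<lambda>x. 0)" "\<forall>x. p x = (\<Sum>k\<le>d. a k x * x v ^ k)"
    by blast
  have ind: "\<forall>k. indep v (a k)" using A by blast
  have "\<forall>k. \<exists>Q. pf Q \<and> (\<forall>x. a k x = Q (E V x))"
  proof
    fix k
    have "dep (insert v V - {v}) (a k)" by (rule decomp_dep[OF A(3) ind A(2) insert.prems(2)])
    then have dk: "dep V (a k)" using insert.hyps(2) by simp
    have sk: "\<forall>i\<in>V. \<forall>j\<in>V. \<forall>x. a k (x \<circ> sw i j) = a k x"
    proof (intro ballI allI)
      fix i j x assume ij: "i \<in> V" "j \<in> V"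
      have "\<forall>x. p (x \<circ> sw i j) = p x" using insert.prems(3) ij unfolding comp_def by auto
      moreover have "\<forall>u. sw i j u = v \<longleftrightarrow> u = v" using ij insert.hyps(2) by (auto simp: sw_def)
      ultimately show "a k (x \<circ> sw i j) = a k x" by (rule decomp_sym[OF A(3) ind A(2)])
    qed
    show "\<exists>Q. pf Q \<and> (\<forall>x. a k x = Q (E V x))"
      by (rule insert.IH) (use A dk sk in \<open>auto simp: comp_def\<close>)
  qed
  then obtain Q where Q: "\<forall>k. pf (Q k) \<and> (\<forall>x. a k x = Q k (E V x))"
    by (subst (asm) choice_iff) blast
  define n where "n = card V + 1"
  define G where "G e y = (\<Sum>k\<le>d. Q k (\<lambda>i. \<Sum>l<n. (- y) ^ l * e (i + 1 + l)) * y ^ k)" for e :: "nat \<Rightarrow> real" and y :: real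
  have pG: "p x = G (E V' x) (x v)" for x
  proof -
    have "E V x = (\<lambda>i. \<Sum>l<n. (- x v) ^ l * E V' x (i + 1 + l))"
      using E_div[OF insert.hyps] by (auto simp: n_def V'_def)
    then show ?thesis using A(3) Q by (simp add: G_def)
  qed
  have symG: "p x = G (E V' x) (x j)" if "j \<in> V'" for x j
  proof -
    have b: "bij_betw (sw v j) V' V'" using that by (intro sw_bij) (auto simp: V'_def)
    have "p x = p (x \<circ> sw v j)" using insert.prems(3) that unfolding comp_def by (auto simp: V'_def)
    also have "\<dots> = G (E V' (x \<circ> sw v j)) ((x \<circ> sw v j) v)" by (rule pG)
    also have "E V' (x \<circ> sw v j) = E V' x" using E_perm[OF b] by (intro ext) simp
    also have "(x \<circ> sw v j) v = x j" by (simp add: sw_def)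
    finally show ?thesis .
  qed
  define H where "H z = G (\<lambda>i. z (Some i)) (z None)" for z :: "nat option \<Rightarrow> real"
  have pfH: "pf H"
  proof -
    have g: "pf (\<lambda>z. \<Sum>l<n. (- z None) ^ l * z (Some (i + 1 + l)))" for i :: nat
      by (rule pf_sum, rule pf_mult, rule pf_pow, rule pf_neg, rule pf_var, rule pf_var)
    have qk: "pf (\<lambda>z. Q k (\<lambda>i. \<Sum>l<n. (- z None) ^ l * z (Some (i + 1 + l))))" for k
      using pf_subst[of "Q k" "\<lambda>i z. \<Sum>l<n. (- z None) ^ l * z (Some (i + 1 + l))", OF _ g] Q by blast
    have "pf (\<lambda>z. \<Sum>k\<le>d. Q k (\<lambda>i. \<Sum>l<n. (- z None) ^ l * z (Some (i + 1 + l))) * z None ^ k)"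
      by (rule pf_sum, rule pf_mult[OF qk pf_pow[OF pf_var]])
    then show ?thesis by (simp add: H_def[abs_def] G_def[abs_def])
  qed
  from pf_decomp[OF pfH, of None] obtain D r where
    R: "\<forall>k. pf (r k) \<and> indep None (r k)" "\<forall>x. H x = (\<Sum>k\<le>D. r k x * x None ^ k)"
    by blast
  define emb where "emb e y = (\<lambda>ob. case ob of None \<Rightarrow> y | Some i \<Rightarrow> e i)" for e :: "nat \<Rightarrow> real" and y :: real
  define r' where "r' k e = r k (emb e 0)" for k e
  have pfr': "pf (r' k)" for k
  proof -
    have "pf (\<lambda>e. case ob of None \<Rightarrow> 0 | Some i \<Rightarrow> e i)" for ob :: "nat option"
      by (cases ob) (simp_all add: pf_const pf_var)
    then have "pf (\<lambda>e. r k (\<lambda>ob. case ob of None \<Rightarrow> 0 | Some i \<Rightarrow> e i))"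
      using pf_subst[of "r k" "\<lambda>ob e. case ob of None \<Rightarrow> 0 | Some i \<Rightarrow> e i"] R(1) by blast
    then show ?thesis by (simp add: r'_def[abs_def] emb_def)
  qed
  have Gr: "G e y = (\<Sum>k\<le>D. r' k e * y ^ k)" for e y
  proof -
    have "G e y = H (emb e y)" by (simp add: H_def emb_def)
    also have "\<dots> = (\<Sum>k\<le>D. r k (emb e y) * y ^ k)" using R(2) by (simp add: emb_def)
    also have "emb e y = (emb e 0)(None := y)" by (auto simp: emb_def fun_eq_iff split: option.splits)
    also have "(\<Sum>k\<le>D. r k ((emb e 0)(None := y)) * y ^ k) = (\<Sum>k\<le>D. r' k e * y ^ k)"
    proof (rule sum.cong[OF refl])
      fix k
      have "indep None (r k)" using R(1) by blast
      then have "r k ((emb e 0)(None := y)) = r k (emb e 0)" unfolding indep_def by blast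
      then show "r k ((emb e 0)(None := y)) * y ^ k = r' k e * y ^ k" by (simp only: r'_def)
    qed
    finally show ?thesis .
  qed
  define s where "s i e = (\<Sum>k\<le>D. r' k e * bb M k i e)" for i e
  have pfs: "pf (s i)" for i unfolding s_def by (intro pf_sum pf_mult pfr' pf_bb)
  have ps: "p x = (\<Sum>i<M. s i (E V' x) * x j ^ i)" if "j \<in> V'" for x j
  proof -
    let ?e = "E V' x"
    have eM: "?e M = 1" using E_top[OF finV'] by (simp add: M_def)
    have root: "(\<Sum>i\<le>M. ?e i * (- x j) ^ i) = 0" using E_root[OF finV' that] by (simp add: M_def)
    have red: "x j ^ k = (\<Sum>i<M. bb M k i ?e * x j ^ i)" for k by (rule bb_red[OF M eM root])
    have "p x = (\<Sum>k\<le>D. r' k ?e * x j ^ k)" using symG[OF that] Gr by simp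
    also have "\<dots> = (\<Sum>k\<le>D. r' k ?e * (\<Sum>i<M. bb M k i ?e * x j ^ i))"
    proof (rule sum.cong[OF refl])
      fix k show "r' k ?e * x j ^ k = r' k ?e * (\<Sum>i<M. bb M k i ?e * x j ^ i)" using red[of k] by simp
    qed
    also have "\<dots> = (\<Sum>k\<le>D. \<Sum>i<M. r' k ?e * bb M k i ?e * x j ^ i)"
      by (simp only: sum_distrib_left mult.assoc)
    also have "\<dots> = (\<Sum>i<M. \<Sum>k\<le>D. r' k ?e * bb M k i ?e * x j ^ i)" by (rule sum.swap)
    also have "\<dots> = (\<Sum>i<M. s i ?e * x j ^ i)" by (simp add: s_def sum_distrib_right)
    finally show ?thesis .
  qed
  have distinct: "p x = s 0 (E V' x)" if inj: "inj_on x V'" for x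
  proof -
    let ?e = "E V' x"
    define T where "T = (\<Sum>i<M. monom (s i ?e) i) - [:p x:]"
    have rootT: "poly T (x j) = 0" if "j \<in> V'" for j
      using ps[OF that] by (simp add: T_def poly_sum poly_monom)
    have "T = 0"
    proof (rule ccontr)
      assume T0: "T \<noteq> 0"
      have "degree T \<le> M - 1"
        unfolding T_def
        by (intro degree_diff_le degree_sum_le) (auto intro: order.trans[OF degree_monom_le])
      moreover have "card {y. poly T y = 0} \<le> degree T" by (rule card_poly_roots_bound[OF T0])
      moreover have "x ` V' \<subseteq> {y. poly T y = 0}" using rootT by auto
      then have "card (x ` V') \<le> card {y. poly T y = 0}"
        by (intro card_mono poly_roots_finite[OF T0])
      moreover have "card (x ` V') = M" using card_image[OF inj] by (simp add: M_def)
      ultimately show False using M by linarith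
    qed
    then have "coeff T 0 = 0" by simp
    moreover have "coeff T 0 = s 0 ?e - p x"
      by (simp add: T_def coeff_sum coeff_monom M)
    ultimately show ?thesis by simp
  qed
  obtain h where h: "bij_betw h V' {0..<card V'}" using ex_bij_betw_finite_nat[OF finV'] by blast
  define w where "w u = real (h u)" for u
  have injw: "inj_on w V'" using h by (auto simp: w_def bij_betw_def inj_on_def)
  have "p x = s 0 (E V' x)" for x
  proof -
    define \<phi> where "\<phi> x = p x - s 0 (E V' x)" for x
    have "pf \<phi>" unfolding \<phi>_def
      by (intro pf_diff insert.prems(1)) (rule pf_subst[OF pfs pf_E[OF finV']])
    from pf_line[OF this, of x w] obtain q where q: "\<forall>t. \<phi> (\<lambda>v. x v + t * w v) = poly q t" by blast
    from inj_line_finite[OF finV' injw, of x] obtain B where B: "finite B" "\<forall>t. t \<notin> B \<longrightarrow> inj_on (\<lambda>u. x u + t * w u) V'"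
      by blast
    have "q = 0"
    proof (rule ccontr)
      assume "q \<noteq> 0"
      then have "finite {t. poly q t = 0}" by (rule poly_roots_finite)
      moreover have "UNIV \<subseteq> {t. poly q t = 0} \<union> B"
      proof
        fix t :: real assume "t \<in> UNIV"
        show "t \<in> {t. poly q t = 0} \<union> B"
        proof (cases "t \<in> B")
          case False
          then have "\<phi> (\<lambda>u. x u + t * w u) = 0" using B(2) distinct by (simp add: \<phi>_def)
          then show ?thesis using q by simp
        qed simp
      qed
      ultimately have "finite (UNIV :: real set)" using B(1) by (meson finite_UnI finite_subset)
      then show False using infinite_UNIV_char_0[where 'a=real] by blast
    qed
    then have "\<phi> (\<lambda>v. x v + 0 * w v) = 0" using q by (metis poly_0)
    moreover have "(\<lambda>v. x v + 0 * w v) = x" by simp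
    ultimately have "\<phi> x = 0" by simp
    then show ?thesis by (simp add: \<phi>_def)
  qed
  then show ?case using pfs by (auto simp: V'_def)
qed



lemma cone_char:
  fixes f :: "'a::real_vector \<Rightarrow> real" and \<mu> :: "'a \<Rightarrow> real^'j"
  assumes fe: "f e > 0" and x: "\<forall>t. f (t *\<^sub>R e + x) = f e * (\<Prod>j\<in>UNIV. t + \<mu> x $ j)"
  shows "(\<forall>j. \<mu> x $ j > 0) \<longleftrightarrow> (\<forall>t\<ge>0. f (t *\<^sub>R e + x) \<noteq> 0)"
proof
  assume pos: "\<forall>j. \<mu> x $ j > 0"
  show "\<forall>t\<ge>0. f (t *\<^sub>R e + x) \<noteq> 0"
  proof (intro allI impI)
    fix t :: real assume "t \<ge> 0"
    then have "(\<Prod>j\<in>UNIV. t + \<mu> x $ j) > 0" using pos by (intro prod_pos) (auto simp: add_nonneg_pos)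
    then have "f e * (\<Prod>j\<in>UNIV. t + \<mu> x $ j) > 0" using fe by (rule mult_pos_pos[rotated])
    moreover have "f (t *\<^sub>R e + x) = f e * (\<Prod>j\<in>UNIV. t + \<mu> x $ j)" using x by blast
    ultimately show "f (t *\<^sub>R e + x) \<noteq> 0" by linarith
  qed
next
  assume nz: "\<forall>t\<ge>0. f (t *\<^sub>R e + x) \<noteq> 0"
  show "\<forall>j. \<mu> x $ j > 0"
  proof (rule ccontr)
    assume "\<not> (\<forall>j. \<mu> x $ j > 0)"
    then obtain j where j: "\<mu> x $ j \<le> 0" by (auto simp: not_less)
    have "(\<Prod>j'\<in>UNIV. - \<mu> x $ j + \<mu> x $ j') = 0" by (rule prod_zero) auto
    moreover have "f ((- \<mu> x $ j) *\<^sub>R e + x) = f e * (\<Prod>j'\<in>UNIV. - \<mu> x $ j + \<mu> x $ j')" using x by blast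
    ultimately have "f ((- \<mu> x $ j) *\<^sub>R e + x) = 0" by (metis mult_zero_right)
    moreover have "- \<mu> x $ j \<ge> 0" using j by simp
    ultimately show False using nz by blast
  qed
qed

lemma cone_lemma:
  fixes f :: "'a::euclidean_space \<Rightarrow> real" and \<mu> :: "'a \<Rightarrow> real^'j"
  assumes D: "subspace D" and e: "e \<in> D" and cont: "continuous_on D f" and fe: "f e > 0"
    and hom: "\<forall>x\<in>D. \<forall>c\<ge>0. f (c *\<^sub>R x) = c ^ N * f x"
    and prd: "\<forall>x\<in>D. \<forall>t. f (t *\<^sub>R e + x) = f e * (\<Prod>j\<in>UNIV. t + \<mu> x $ j)"
  shows "connected_component_set {x. x \<in> D \<and> f x \<noteq> 0} e = {x \<in> D. \<forall>j. \<mu> x $ j > 0}"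
proof -
  define U where "U = {x. x \<in> D \<and> f x \<noteq> 0}"
  define G where "G = {x \<in> D. \<forall>j. \<mu> x $ j > 0}"
  have Gc: "x \<in> G \<longleftrightarrow> x \<in> D \<and> (\<forall>t\<ge>0. f (t *\<^sub>R e + x) \<noteq> 0)" for x
    using cone_char[where f=f and e=e and x=x and \<mu>=\<mu>, OF fe] prd by (auto simp: G_def)
  have fe_mult: "f (c *\<^sub>R e) = c ^ N * f e" if "c \<ge> 0" for c using hom e that by blast
  have GU: "G \<subseteq> U"
  proof
    fix x assume "x \<in> G"
    then have "x \<in> D" "f (0 *\<^sub>R e + x) \<noteq> 0" using Gc by auto
    then show "x \<in> U" by (simp add: U_def)
  qed
  have eG: "e \<in> G"
  proof -
    have "f (t *\<^sub>R e + e) \<noteq> 0" if "t \<ge> 0" for t :: real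
    proof -
      have "t *\<^sub>R e + e = (t + 1) *\<^sub>R e" by (simp add: algebra_simps)
      then show ?thesis using fe_mult[of "t+1"] that fe by simp
    qed
    then show ?thesis using Gc e by blast
  qed
  have conG: "connected G"
  proof (rule starlike_imp_connected, unfold starlike_def, intro bexI[OF _ eG] ballI subsetI)
    fix x y assume xG: "x \<in> G" and y: "y \<in> closed_segment e x"
    then obtain u where u: "0 \<le> u" "u \<le> 1" "y = (1 - u) *\<^sub>R e + u *\<^sub>R x"
      by (auto simp: closed_segment_def)
    have xD: "x \<in> D" using xG Gc by blast
    have yD: "y \<in> D" using u(3) D e xD by (simp add: subspace_add subspace_scale)
    have "f (t *\<^sub>R e + y) \<noteq> 0" if t: "t \<ge> 0" for t
    proof (cases "u = 0")
      case True
      have "t *\<^sub>R e + y = (t + 1) *\<^sub>R e" using True u by (simp add: algebra_simps)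
      then show ?thesis using fe_mult[of "t+1"] t fe by simp
    next
      case False
      then have up: "u > 0" using u by simp
      define s where "s = (t + 1 - u) / u"
      have s: "s \<ge> 0" using up u t by (simp add: s_def)
      have us: "u * s = t + 1 - u" using up by (simp add: s_def)
      have "u *\<^sub>R (s *\<^sub>R e + x) = (u * s) *\<^sub>R e + u *\<^sub>R x" by (simp add: scaleR_add_right)
      also have "\<dots> = (t + 1 - u) *\<^sub>R e + u *\<^sub>R x" by (simp only: us)
      also have "\<dots> = t *\<^sub>R e + y" by (simp add: u(3) algebra_simps)
      finally have "t *\<^sub>R e + y = u *\<^sub>R (s *\<^sub>R e + x)" by simp
      moreover have "s *\<^sub>R e + x \<in> D" using D e xD by (simp add: subspace_add subspace_scale)
      ultimately have "f (t *\<^sub>R e + y) = u ^ N * f (s *\<^sub>R e + x)" using hom up by simp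
      moreover have "f (s *\<^sub>R e + x) \<noteq> 0" using Gc xG s by blast
      ultimately show ?thesis using up by simp
    qed
    then show "y \<in> G" using Gc yD by blast
  qed
  define Z where "Z = {z \<in> {0..1::real} \<times> D. f (fst z *\<^sub>R e + (1 - fst z) *\<^sub>R snd z) = 0}"
  define P where "P = {y. \<exists>u. u \<in> {0..1::real} \<and> (u, y) \<in> Z}"
  have closedD: "closed D" by (rule closed_subspace[OF D])
  have "closed Z"
    unfolding Z_def
  proof (rule continuous_closed_preimage_constant)
    show "closed ({0..1::real} \<times> D)" by (intro closed_Times closedD) simp
    have "continuous_on ({0..1::real} \<times> D) (\<lambda>z. fst z *\<^sub>R e + (1 - fst z) *\<^sub>R snd z)"
      by (intro continuous_intros)
    moreover have "(\<lambda>z. fst z *\<^sub>R e + (1 - fst z) *\<^sub>R snd z) ` ({0..1::real} \<times> D) \<subseteq> D"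
      using D e by (auto simp: subspace_add subspace_scale)
    ultimately show "continuous_on ({0..1::real} \<times> D) (\<lambda>z. f (fst z *\<^sub>R e + (1 - fst z) *\<^sub>R snd z))"
      by (rule continuous_on_compose2[OF cont])
  qed
  then have "closed P" unfolding P_def by (intro closed_compact_projection) auto
  have GP: "G = U \<inter> - P"
  proof (intro equalityI subsetI)
    fix x assume xG: "x \<in> G"
    then have xD: "x \<in> D" using Gc by blast
    have "x \<notin> P"
    proof
      assume "x \<in> P"
      then obtain u where u: "0 \<le> u" "u \<le> 1" "f (u *\<^sub>R e + (1 - u) *\<^sub>R x) = 0"
        by (auto simp: P_def Z_def)
      have "u \<noteq> 1" using u fe by auto
      then have u1: "u < 1" using u by simp
      define t where "t = u / (1 - u)"
      have t: "t \<ge> 0" using u u1 by (simp add: t_def)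
      have "u *\<^sub>R e + (1 - u) *\<^sub>R x = (1 - u) *\<^sub>R (t *\<^sub>R e + x)"
        using u1 by (simp add: t_def scaleR_add_right)
      moreover have "t *\<^sub>R e + x \<in> D" using D e xD by (simp add: subspace_add subspace_scale)
      ultimately have "f (u *\<^sub>R e + (1 - u) *\<^sub>R x) = (1 - u) ^ N * f (t *\<^sub>R e + x)"
        using hom u1 by simp
      moreover have "f (t *\<^sub>R e + x) \<noteq> 0" using Gc xG t by blast
      ultimately show False using u u1 by simp
    qed
    then show "x \<in> U \<inter> - P" using xG GU by auto
  next
    fix x assume x: "x \<in> U \<inter> - P"
    then have xD: "x \<in> D" by (simp add: U_def)
    have "f (t *\<^sub>R e + x) \<noteq> 0" if t: "t \<ge> 0" for t
    proof
      assume f0: "f (t *\<^sub>R e + x) = 0"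
      define u where "u = t / (1 + t)"
      have u: "0 \<le> u" "u \<le> 1" using t by (auto simp: u_def)
      have "u *\<^sub>R e + (1 - u) *\<^sub>R x = (1 / (1 + t)) *\<^sub>R (t *\<^sub>R e + x)"
        using t by (simp add: u_def scaleR_add_right field_simps)
      moreover have "t *\<^sub>R e + x \<in> D" using D e xD by (simp add: subspace_add subspace_scale)
      ultimately have "f (u *\<^sub>R e + (1 - u) *\<^sub>R x) = 0" using hom t f0 by simp
      then have "x \<in> P" using u xD by (auto simp: P_def Z_def)
      then show False using x by simp
    qed
    then show "x \<in> G" using Gc xD by blast
  qed
  define K where "K = CARD('j)"
  define H where "H = D \<inter> (\<Inter>t\<in>{0<..}. {x \<in> D. f e * t ^ K \<le> f (t *\<^sub>R e + x)})"
  have "closed H"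
    unfolding H_def
  proof (intro closed_Int closedD closed_INT ballI continuous_on_closed_Collect_le continuous_intros)
    fix t :: real
    have "(\<lambda>x. t *\<^sub>R e + x) ` D \<subseteq> D" using D e by (auto simp: subspace_add subspace_scale)
    then show "continuous_on D (\<lambda>x. f (t *\<^sub>R e + x))"
      by (intro continuous_on_compose2[OF cont]) (auto intro: continuous_intros)
  qed
  have GH: "G = U \<inter> H"
  proof (intro equalityI subsetI)
    fix x assume xG: "x \<in> G"
    then have xD: "x \<in> D" and pos: "\<forall>j. \<mu> x $ j > 0" by (auto simp: G_def)
    have "f e * t ^ K \<le> f (t *\<^sub>R e + x)" if "t > 0" for t :: real
    proof -
      have "(\<Prod>j\<in>(UNIV::'j set). t) \<le> (\<Prod>j\<in>UNIV. t + \<mu> x $ j)"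
        using that pos by (intro prod_mono) (auto simp: less_imp_le)
      then have "t ^ K \<le> (\<Prod>j\<in>UNIV. t + \<mu> x $ j)" by (simp add: K_def)
      then show ?thesis using prd xD fe by simp
    qed
    then show "x \<in> U \<inter> H" using xG GU xD by (auto simp: H_def)
  next
    fix x assume x: "x \<in> U \<inter> H"
    then have xD: "x \<in> D" and fx: "f x \<noteq> 0" by (auto simp: U_def)
    have "f (t *\<^sub>R e + x) \<noteq> 0" if t: "t \<ge> 0" for t
    proof (cases "t = 0")
      case True then show ?thesis using fx by simp
    next
      case False
      then have "t > 0" using t by simp
      then have "f e * t ^ K \<le> f (t *\<^sub>R e + x)" using x by (auto simp: H_def)
      moreover have "f e * t ^ K > 0" using fe \<open>t > 0\<close> by simp
      ultimately show ?thesis by simp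
    qed
    then show "x \<in> G" using Gc xD by blast
  qed
  define C where "C = connected_component_set U e"
  have "G \<subseteq> C" unfolding C_def by (rule connected_component_maximal[OF eG conG GU])
  moreover have "C \<subseteq> G"
  proof -
    have conC: "connected C" unfolding C_def by (rule connected_connected_component)
    have CU: "C \<subseteq> U" unfolding C_def by (rule connected_component_subset)
    have o: "openin (top_of_set C) (C \<inter> G)"
    proof -
      have "C \<inter> G = C \<inter> - P" using GP CU by auto
      then show ?thesis using \<open>closed P\<close> by (simp add: openin_open_Int open_Compl)
    qed
    have c: "closedin (top_of_set C) (C \<inter> G)"
    proof -
      have "C \<inter> G = C \<inter> H" using GH CU by auto
      then show ?thesis using \<open>closed H\<close> by (simp add: closedin_closed_Int)
    qed
    have "e \<in> C" unfolding C_def using eG GU by auto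
    then have "C \<inter> G \<noteq> {}" using eG by auto
    then have "C \<inter> G = C" using conC o c unfolding connected_clopen by blast
    then show ?thesis by blast
  qed
  ultimately show ?thesis by (simp add: C_def U_def G_def)
qed



definition deg :: "('v \<Rightarrow>\<^sub>0 nat) \<Rightarrow> nat" where
  "deg m = (\<Sum>v\<in>Poly_Mapping.keys m. Poly_Mapping.lookup m v)"

lemma mon_scale: "mon m (\<lambda>v. s * x v) = s ^ deg m * mon m x"
  by (simp add: mon_def deg_def power_mult_distrib prod.distrib power_sum)

lemma mpoly_eval_scale: "mpoly_eval c (\<lambda>v. s * x v) = (\<Sum>m\<in>Poly_Mapping.keys c. Poly_Mapping.lookup c m * s ^ deg m * mon m x)"
  by (simp add: mpoly_eval_mon mon_scale mult.assoc)

lemma mpoly_homog: "homog_mpoly N c \<Longrightarrow> mpoly_eval c (\<lambda>v. s * x v) = s ^ N * mpoly_eval c x"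
  unfolding mpoly_eval_scale
  by (simp add: homog_mpoly_def deg_def mpoly_eval_mon sum_distrib_left mult_ac)

lemma mpoly_cont: "(\<And>v. continuous_on S (\<lambda>x. g x v)) \<Longrightarrow> continuous_on S (\<lambda>x. mpoly_eval c (g x))"
  unfolding mpoly_eval_def by (intro continuous_intros) auto

lemma poly_map_of_real: "poly (map_poly complex_of_real p) (complex_of_real x) = complex_of_real (poly p x)"
  by (induction p) (auto simp: map_poly_pCons)

lemma real_roots_prod:
  fixes q :: "real poly" and r :: "'j \<Rightarrow> real"
  assumes fin: "finite S" and c: "c \<noteq> 0" and q: "\<forall>t. poly q t = c * (\<Prod>j\<in>S. t + r j)"
  shows "only_real_roots q"
  unfolding only_real_roots_def
proof (intro allI impI)
  fix z :: complex
  assume z: "poly (map_poly complex_of_real q) z = 0"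
  define P where "P = smult (of_real c) (\<Prod>j\<in>S. [:complex_of_real (r j), 1:])"
  have polyP: "poly P w = of_real c * (\<Prod>j\<in>S. w + of_real (r j))" for w
    by (simp add: P_def poly_prod add.commute)
  have "map_poly complex_of_real q = P"
  proof (rule ccontr)
    assume ne: "map_poly complex_of_real q \<noteq> P"
    then have "map_poly complex_of_real q - P \<noteq> 0" by simp
    then have fin2: "finite {w. poly (map_poly complex_of_real q - P) w = 0}" by (rule poly_roots_finite)
    have "range complex_of_real \<subseteq> {w. poly (map_poly complex_of_real q - P) w = 0}"
    proof
      fix w assume "w \<in> range complex_of_real"
      then obtain t where t: "w = of_real t" by blast
      have "poly (map_poly complex_of_real q) w = of_real (c * (\<Prod>j\<in>S. t + r j))"
        using q t poly_map_of_real[of q t] by simp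
      also have "\<dots> = poly P w" by (simp add: polyP t)
      finally show "w \<in> {w. poly (map_poly complex_of_real q - P) w = 0}" by simp
    qed
    then have "finite (range complex_of_real)" using fin2 finite_subset by blast
    moreover have "inj complex_of_real" by (simp add: inj_def)
    ultimately have "finite (UNIV :: real set)" using finite_imageD by blast
    then show False using infinite_UNIV_char_0[where 'a=real] by blast
  qed
  then have "poly P z = 0" using z by simp
  then have "(\<Prod>j\<in>S. z + of_real (r j)) = 0" using c by (simp add: polyP)
  then obtain j where "z + of_real (r j) = 0" using fin by (auto simp: prod_zero_iff)
  then have "z = of_real (- r j)" by (simp add: eq_neg_iff_add_eq_0)
  then show "z \<in> \<real>" by simp
qed

lemma sym_mat_1: "sym_mat (mat 1 :: real^'n^'n)"
  by (simp add: sym_mat_def transpose_mat)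

lemma sym_mat_add: "sym_mat A \<Longrightarrow> sym_mat B \<Longrightarrow> sym_mat (A + B)"
  by (simp add: sym_mat_def transpose_def vec_eq_iff)

lemma sym_mat_scale: "sym_mat A \<Longrightarrow> sym_mat (c *\<^sub>R A)"
  by (simp add: sym_mat_def transpose_scalar)

lemma sym_mat_shift: "sym_mat A \<Longrightarrow> sym_mat (t *\<^sub>R mat 1 + A)"
  by (intro sym_mat_add sym_mat_scale sym_mat_1)

lemma subspace_sym: "subspace {A :: real^'n^'n. sym_mat A}"
  unfolding subspace_def
  by (auto intro: sym_mat_add sym_mat_scale simp: sym_mat_def transpose_def vec_eq_iff)

lemma mat1_entry: "(mat 1 :: real^'n^'n) $ i $ j = (if i = j then 1 else 0)"
  by (simp add: mat_def)

lemma homog_part: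
  fixes c :: "('v \<Rightarrow>\<^sub>0 nat) \<Rightarrow>\<^sub>0 real"
  assumes sc: "\<forall>s. mpoly_eval c (\<lambda>v. s * x v) = s ^ K * mpoly_eval c x"
  shows "mpoly_eval (\<Sum>m\<in>{m\<in>Poly_Mapping.keys c. deg m = K}. Poly_Mapping.single m (Poly_Mapping.lookup c m)) x = mpoly_eval c x"
proof -
  define B where "B = max K (\<Sum>m\<in>Poly_Mapping.keys c. deg m)"
  define g where "g k = (\<Sum>m\<in>Poly_Mapping.keys c. if deg m = k then Poly_Mapping.lookup c m * mon m x else 0)" for k
  have degB: "deg m \<le> B" if "m \<in> Poly_Mapping.keys c" for m
  proof -
    have "deg m \<le> (\<Sum>m\<in>Poly_Mapping.keys c. deg m)"
      using that by (intro member_le_sum) auto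
    then show ?thesis by (simp add: B_def)
  qed
  have "\<forall>s. (\<Sum>k\<le>B. g k * s ^ k) = (\<Sum>k\<le>B. (if k = K then mpoly_eval c x else 0) * s ^ k)"
  proof
    fix s :: real
    have "(\<Sum>k\<le>B. g k * s ^ k) = (\<Sum>k\<le>B. \<Sum>m\<in>Poly_Mapping.keys c. if deg m = k then Poly_Mapping.lookup c m * s ^ deg m * mon m x else 0)"
      unfolding g_def sum_distrib_right by (intro sum.cong refl) auto
    also have "\<dots> = (\<Sum>m\<in>Poly_Mapping.keys c. \<Sum>k\<le>B. if deg m = k then Poly_Mapping.lookup c m * s ^ deg m * mon m x else 0)"
      by (rule sum.swap)
    also have "\<dots> = (\<Sum>m\<in>Poly_Mapping.keys c. Poly_Mapping.lookup c m * s ^ deg m * mon m x)"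
      by (intro sum.cong refl) (use degB in \<open>simp add: sum.delta\<close>)
    also have "\<dots> = s ^ K * mpoly_eval c x" using sc by (simp add: mpoly_eval_scale)
    also have "\<dots> = (\<Sum>k\<le>B. if k = K then mpoly_eval c x * s ^ k else 0)"
    proof -
      have "K \<in> {..B}" by (simp add: B_def)
      then show ?thesis by (simp add: sum.delta mult.commute)
    qed
    also have "\<dots> = (\<Sum>k\<le>B. (if k = K then mpoly_eval c x else 0) * s ^ k)"
      by (intro sum.cong refl) auto
    finally show "(\<Sum>k\<le>B. g k * s ^ k) = (\<Sum>k\<le>B. (if k = K then mpoly_eval c x else 0) * s ^ k)" .
  qed
  from coeff_unique[OF this, of K] have "g K = mpoly_eval c x" by (simp add: B_def)
  moreover have "mpoly_eval (\<Sum>m\<in>{m\<in>Poly_Mapping.keys c. deg m = K}. Poly_Mapping.single m (Poly_Mapping.lookup c m)) x = g K"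
    by (simp add: mpoly_eval_sum g_def sum.inter_filter) (intro sum.cong refl, simp add: mpoly_eval_single mpoly_eval_zero)
  ultimately show ?thesis by simp
qed

lemma homog_part_homog:
  "homog_mpoly K (\<Sum>m\<in>{m\<in>Poly_Mapping.keys c. deg m = K}. Poly_Mapping.single m (Poly_Mapping.lookup c m))"
  unfolding homog_mpoly_def
proof
  fix m assume "m \<in> Poly_Mapping.keys (\<Sum>m\<in>{m\<in>Poly_Mapping.keys c. deg m = K}. Poly_Mapping.single m (Poly_Mapping.lookup c m))"
  then have "(\<Sum>m'\<in>{m\<in>Poly_Mapping.keys c. deg m = K}. Poly_Mapping.lookup (Poly_Mapping.single m' (Poly_Mapping.lookup c m')) m) \<noteq> 0"
    by (simp add: in_keys_iff lookup_sum)
  then obtain m' where "m' \<in> {m\<in>Poly_Mapping.keys c. deg m = K}" "Poly_Mapping.lookup (Poly_Mapping.single m' (Poly_Mapping.lookup c m')) m \<noteq> 0"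
    by (meson sum.neutral)
  then have "deg m = K" by (auto simp: lookup_single when_def split: if_splits)
  then show "(\<Sum>v\<in>Poly_Mapping.keys m. Poly_Mapping.lookup m v) = K" by (simp add: deg_def)
qed



lemma transpose_add_mat: "transpose (X + Y) = transpose X + transpose (Y :: real^'n^'m)"
  by (simp add: transpose_def vec_eq_iff)

lemma sum_extend: "(d::nat) \<le> B \<Longrightarrow> (\<forall>k. d < k \<longrightarrow> g k = 0) \<Longrightarrow> (\<Sum>k\<le>d. g k) = (\<Sum>k\<le>B. g k)"
  by (intro sum.mono_neutral_left) auto

lemma ent_scale: "(\<lambda>(i,j). (c *\<^sub>R A) $ i $ j) = (\<lambda>v. c * (\<lambda>(i,j). (A::real^'n^'n) $ i $ j) v)"
  by (auto simp: fun_eq_iff)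

lemma cont_ent: "continuous_on S (\<lambda>A::real^'n^'n. (\<lambda>(i,j). A $ i $ j) v)"
proof -
  have "(\<lambda>A::real^'n^'n. (\<lambda>(i,j). A $ i $ j) v) = (\<lambda>A. A $ fst v $ snd v)" by (auto simp: fun_eq_iff split: prod.split)
  moreover have "continuous_on S (\<lambda>A::real^'n^'n. A $ fst v $ snd v)" by (intro continuous_intros)
  ultimately show ?thesis by metis
qed

lemma pf_emb0: "pf f \<Longrightarrow> pf (\<lambda>y. f (\<lambda>ob. case ob of None \<Rightarrow> 0 | Some v \<Rightarrow> y v))"
proof -
  assume "pf f"
  have "pf (\<lambda>y. case ob of None \<Rightarrow> 0 | Some v \<Rightarrow> y v)" for ob :: "'a option"
    by (cases ob) (simp_all add: pf_const pf_var)
  then show ?thesis using pf_subst[of f "\<lambda>ob y. case ob of None \<Rightarrow> 0 | Some v \<Rightarrow> y v"] \<open>pf f\<close> by blast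
qed


theorem theorem7p4:
  fixes F :: "real^'n^'n \<Rightarrow> real"
    and lamF :: "real^'n^'n \<Rightarrow> real^'m"
    and p :: "real^'m \<Rightarrow> real"
    and Lam :: "real^'m \<Rightarrow> real^'k"
  assumes F_GD: "GD_poly CARD('m) F"
    and lamF_def: "\<forall>A. sym_mat A \<longrightarrow>
       (\<forall>t. F (t *\<^sub>R mat 1 + A) = F (mat 1) * (\<Prod>j\<in>UNIV. t + lamF A $ j))"
    and p_univ: "universal_GD CARD('k) p"
    and Lam_def: "\<forall>x t. p (t *\<^sub>R vec 1 + x) = p (vec 1) * (\<Prod>j\<in>UNIV. t + Lam x $ j)"
  shows "GD_poly CARD('k) (\<lambda>A. p (lamF A))
    \<and> (\<forall>A. sym_mat A \<longrightarrow>
         (\<forall>t. p (lamF (t *\<^sub>R mat 1 + A)) = p (lamF (mat 1)) * (\<Prod>j\<in>UNIV. t + Lam (lamF A) $ j)))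
    \<and> garding_cone (\<lambda>A. p (lamF A)) = {A. sym_mat A \<and> lamF A \<in> garding_cone_vec p}
    \<and> (real_invariant F \<longrightarrow> real_invariant (\<lambda>A. p (lamF A)))"
proof -
  define M where "M = CARD('m)"
  define K where "K = CARD('k)"
  from F_GD obtain cF where cF: "homog_mpoly M cF" "\<forall>A. sym_mat A \<longrightarrow> F A = mpoly_eval cF (\<lambda>(i,j). A$i$j)"
    unfolding GD_poly_def homog_poly_on_Sym_def M_def by blast
  have FI: "F (mat 1) > 0" using F_GD by (simp add: GD_poly_def)
  have posF: "\<forall>A. pos_def A \<longrightarrow> A \<in> garding_cone F" using F_GD by (simp add: GD_poly_def)
  from p_univ obtain cp where cp: "homog_mpoly K cp" "\<forall>m. Poly_Mapping.lookup cp m \<ge> 0" "\<forall>x. p x = mpoly_eval cp (\<lambda>i. x $ i)"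
    unfolding universal_GD_def K_def by blast
  have psym: "\<forall>\<sigma> x. \<sigma> permutes (UNIV :: 'm set) \<longrightarrow> p (\<chi> i. x $ \<sigma> i) = p x"
    using p_univ by (simp add: universal_GD_def)
  have pe: "p (vec 1) > 0" using p_univ by (simp add: universal_GD_def)
  have Fhom: "F (c *\<^sub>R A) = c ^ M * F A" if "sym_mat A" for c A
  proof -
    have "F (c *\<^sub>R A) = mpoly_eval cF (\<lambda>(i,j). (c *\<^sub>R A)$i$j)" using cF that sym_mat_scale by blast
    also have "\<dots> = c ^ M * mpoly_eval cF (\<lambda>(i,j). A$i$j)" unfolding ent_scale by (rule mpoly_homog[OF cF(1)])
    finally show ?thesis using cF that by simp
  qed
  have phom: "p (c *\<^sub>R x) = c ^ K * p x" for c x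
  proof -
    have "p (c *\<^sub>R x) = mpoly_eval cp (\<lambda>i. c * x $ i)" using cp by simp
    also have "\<dots> = c ^ K * p x" using mpoly_homog[OF cp(1), of c "\<lambda>i. x $ i"] cp by simp
    finally show ?thesis .
  qed
  \<comment> \<open>symmetric function theorem applied to p\<close>
  define p' where "p' z = mpoly_eval cp z" for z :: "'m \<Rightarrow> real"
  have pp': "p x = p' (\<lambda>i. x $ i)" for x using cp by (simp add: p'_def)
  have symp': "\<forall>i\<in>UNIV. \<forall>j\<in>UNIV. \<forall>z. p' (z \<circ> sw i j) = p' z"
  proof (intro ballI allI)
    fix i j :: 'm and z
    have perm: "sw i j permutes UNIV" by (rule bij_imp_permutes[OF sw_bij]) auto
    have "p' (z \<circ> sw i j) = p (\<chi> k. (\<chi> k. z k) $ sw i j k)" by (simp add: pp' comp_def)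
    also have "\<dots> = p (\<chi> k. z k)" using psym perm by blast
    also have "\<dots> = p' z" by (simp add: pp')
    finally show "p' (z \<circ> sw i j) = p' z" .
  qed
  have "\<exists>Q. pf Q \<and> (\<forall>z. p' z = Q (E UNIV z))"
  proof (rule ftsp)
    show "dep UNIV p'" unfolding dep_def
    proof (intro allI impI)
      fix x y :: "'m \<Rightarrow> real" assume "\<forall>u\<in>UNIV. x u = y u"
      then have "x = y" by auto
      then show "p' x = p' y" by simp
    qed
  qed (use symp' in \<open>auto simp: p'_def[abs_def] pf_mpoly\<close>)
  then obtain Q where Q: "pf Q" "\<forall>z. p' z = Q (E UNIV z)" by blast
  have KL: "p x = p y" if "\<forall>t. (\<Prod>j\<in>UNIV. t + x $ j) = (\<Prod>j\<in>UNIV. t + y $ j)" for x y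
  proof -
    have "E UNIV (\<lambda>i. x $ i) = E UNIV (\<lambda>i. y $ i)"
      using E_eq_prod[where V=UNIV and x="\<lambda>i. x $ i" and y="\<lambda>i. y $ i"] that by (intro ext) blast
    then show ?thesis using Q pp' by metis
  qed
  have cardM: "card (UNIV :: 'm set) = M" by (simp add: M_def)
  have L1: "p (lamF (mat 1)) = p (vec 1)"
  proof (rule KL, rule allI)
    fix s :: real
    have "F (mat 1) * (\<Prod>j\<in>UNIV. s + lamF (mat 1) $ j) = F (s *\<^sub>R mat 1 + mat 1)"
      using lamF_def sym_mat_1 by metis
    also have "s *\<^sub>R mat 1 + mat 1 = (s + 1) *\<^sub>R (mat 1 :: real^'n^'n)" by (simp add: algebra_simps)
    also have "F \<dots> = (s + 1) ^ M * F (mat 1)" by (rule Fhom[OF sym_mat_1])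
    also have "(s + 1) ^ M = (\<Prod>j\<in>UNIV. s + (vec 1 :: real^'m) $ j)" by (simp add: cardM)
    finally show "(\<Prod>j\<in>UNIV. s + lamF (mat 1) $ j) = (\<Prod>j\<in>UNIV. s + (vec 1 :: real^'m) $ j)"
      using FI by (simp add: mult.commute)
  qed
  have L2: "p (lamF (t *\<^sub>R mat 1 + A)) = p (t *\<^sub>R vec 1 + lamF A)" if A: "sym_mat A" for t A
  proof (rule KL, rule allI)
    fix s :: real
    have "F (mat 1) * (\<Prod>j\<in>UNIV. s + lamF (t *\<^sub>R mat 1 + A) $ j) = F (s *\<^sub>R mat 1 + (t *\<^sub>R mat 1 + A))"
      using lamF_def sym_mat_shift[OF A] by metis
    also have "s *\<^sub>R mat 1 + (t *\<^sub>R mat 1 + A) = (s + t) *\<^sub>R mat 1 + A" by (simp add: algebra_simps)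
    also have "F \<dots> = F (mat 1) * (\<Prod>j\<in>UNIV. (s + t) + lamF A $ j)" using lamF_def A by blast
    finally show "(\<Prod>j\<in>UNIV. s + lamF (t *\<^sub>R mat 1 + A) $ j) = (\<Prod>j\<in>UNIV. s + (t *\<^sub>R vec 1 + lamF A) $ j)"
      using FI by (simp add: add.assoc)
  qed
  have conj2: "p (lamF (t *\<^sub>R mat 1 + A)) = p (lamF (mat 1)) * (\<Prod>j\<in>UNIV. t + Lam (lamF A) $ j)"
    if "sym_mat A" for t A
    using L2[OF that] L1 Lam_def by simp
  have L3: "p (lamF (s *\<^sub>R A)) = s ^ K * p (lamF A)" if A: "sym_mat A" for s A
  proof -
    have "p (lamF (s *\<^sub>R A)) = p (s *\<^sub>R lamF A)"
    proof (rule KL, rule allI)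
      fix t :: real
      have "F (mat 1) * (\<Prod>j\<in>UNIV. t + lamF (s *\<^sub>R A) $ j) = F (t *\<^sub>R mat 1 + s *\<^sub>R A)"
        using lamF_def sym_mat_scale[OF A] by metis
      also have "\<dots> = F (mat 1) * (\<Prod>j\<in>UNIV. t + (s *\<^sub>R lamF A) $ j)"
      proof (cases "s = 0")
        case True
        have "F (t *\<^sub>R mat 1 + s *\<^sub>R A) = t ^ M * F (mat 1)" using True Fhom[OF sym_mat_1] by simp
        then show ?thesis using True by (simp add: cardM mult.commute)
      next
        case False
        have "t *\<^sub>R mat 1 + s *\<^sub>R A = s *\<^sub>R ((t / s) *\<^sub>R mat 1 + A)"
          using False by (simp add: scaleR_add_right)
        then have "F (t *\<^sub>R mat 1 + s *\<^sub>R A) = s ^ M * F ((t / s) *\<^sub>R mat 1 + A)"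
          using Fhom[OF sym_mat_shift[OF A]] by simp
        also have "\<dots> = s ^ M * (F (mat 1) * (\<Prod>j\<in>UNIV. t / s + lamF A $ j))" using lamF_def A by simp
        also have "\<dots> = F (mat 1) * ((\<Prod>j\<in>(UNIV::'m set). s) * (\<Prod>j\<in>UNIV. t / s + lamF A $ j))"
          by (simp add: cardM)
        also have "\<dots> = F (mat 1) * (\<Prod>j\<in>UNIV. s * (t / s + lamF A $ j))" by (simp add: prod.distrib)
        also have "\<dots> = F (mat 1) * (\<Prod>j\<in>UNIV. t + (s *\<^sub>R lamF A) $ j)"
          using False by (simp add: distrib_left)
        finally show ?thesis .
      qed
      finally show "(\<Prod>j\<in>UNIV. t + lamF (s *\<^sub>R A) $ j) = (\<Prod>j\<in>UNIV. t + (s *\<^sub>R lamF A) $ j)"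
        using FI by simp
    qed
    then show ?thesis by (simp add: phom)
  qed
  define W where "W w = mpoly_eval cF (\<lambda>v. w None * (if fst v = snd v then 1 else 0) + w (Some v))"
    for w :: "('n \<times> 'n) option \<Rightarrow> real"
  have pfW: "pf W"
  proof -
    have "pf (\<lambda>w. w None * (if fst v = snd v then 1 else 0) + w (Some v))" for v :: "'n \<times> 'n"
      by (rule pf_add[OF pf_mult[OF pf_var pf_const] pf_var])
    then have "pf (\<lambda>w. mpoly_eval cF (\<lambda>v. (\<lambda>v w. w None * (if fst v = snd v then 1 else 0) + w (Some v)) v w))"
      by (rule pf_mpoly_subst)
    then show ?thesis by (simp add: W_def[abs_def])
  qed
  from pf_decomp[OF pfW, of None] obtain d a where
    Wd: "\<forall>k. pf (a k) \<and> indep None (a k)" "\<forall>k>d. a k = (\<lambda>x. 0)" "\<forall>x. W x = (\<Sum>k\<le>d. a k x * x None ^ k)"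
    by blast
  define emb0 where "emb0 y = (\<lambda>ob. case ob of None \<Rightarrow> 0 | Some v \<Rightarrow> y v)" for y :: "'n \<times> 'n \<Rightarrow> real"
  define ent where "ent A = (\<lambda>(i,j). (A::real^'n^'n) $ i $ j)" for A
  have FW: "F (t *\<^sub>R mat 1 + A) = (\<Sum>k\<le>d. a k (emb0 (ent A)) * t ^ k)" if A: "sym_mat A" for t A
  proof -
    have "F (t *\<^sub>R mat 1 + A) = mpoly_eval cF (\<lambda>(i,j). (t *\<^sub>R mat 1 + A) $ i $ j)"
      using cF sym_mat_shift[OF A] by blast
    also have "(\<lambda>(i,j). (t *\<^sub>R mat 1 + A) $ i $ j) = (\<lambda>v. ((emb0 (ent A))(None := t)) None * (if fst v = snd v then 1 else 0) + ((emb0 (ent A))(None := t)) (Some v))"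
      by (auto simp: fun_eq_iff emb0_def ent_def mat1_entry)
    also have "mpoly_eval cF \<dots> = W ((emb0 (ent A))(None := t))" by (simp add: W_def)
    also have "\<dots> = (\<Sum>k\<le>d. a k ((emb0 (ent A))(None := t)) * t ^ k)" using Wd(3) by simp
    also have "\<dots> = (\<Sum>k\<le>d. a k (emb0 (ent A)) * t ^ k)"
    proof (rule sum.cong[OF refl])
      fix k
      have "indep None (a k)" using Wd(1) by blast
      then have "a k ((emb0 (ent A))(None := t)) = a k (emb0 (ent A))" unfolding indep_def by blast
      then show "a k ((emb0 (ent A))(None := t)) * t ^ k = a k (emb0 (ent A)) * t ^ k" by simp
    qed
    finally show ?thesis .
  qed
  define h where "h i y = (if i \<le> M then a i (emb0 y) * (1 / F (mat 1)) else 0)" for i y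
  have Eh: "E UNIV (\<lambda>j. lamF A $ j) i = h i (ent A)" if A: "sym_mat A" for A i
  proof (cases "i \<le> M")
    case False
    then show ?thesis using E_top[of "UNIV :: 'm set" "\<lambda>j. lamF A $ j"] by (simp add: h_def cardM)
  next
    case True
    define B where "B = max d M"
    have "\<forall>t. (\<Sum>k\<le>B. a k (emb0 (ent A)) * t ^ k) = (\<Sum>k\<le>B. (F (mat 1) * E UNIV (\<lambda>j. lamF A $ j) k) * t ^ k)"
    proof
      fix t :: real
      have "(\<Sum>k\<le>B. a k (emb0 (ent A)) * t ^ k) = (\<Sum>k\<le>d. a k (emb0 (ent A)) * t ^ k)"
        by (rule sum_extend[symmetric]) (use Wd(2) in \<open>auto simp: B_def\<close>)
      also have "\<dots> = F (t *\<^sub>R mat 1 + A)" using FW[OF A] by simp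
      also have "\<dots> = F (mat 1) * (\<Prod>j\<in>UNIV. t + lamF A $ j)" using lamF_def A by blast
      also have "\<dots> = F (mat 1) * (\<Sum>k\<le>M. E UNIV (\<lambda>j. lamF A $ j) k * t ^ k)"
        using E_sum[of "UNIV :: 'm set" "\<lambda>j. lamF A $ j" t] by (simp add: cardM)
      also have "\<dots> = (\<Sum>k\<le>M. (F (mat 1) * E UNIV (\<lambda>j. lamF A $ j) k) * t ^ k)"
        by (simp add: sum_distrib_left mult.assoc)
      also have "\<dots> = (\<Sum>k\<le>B. (F (mat 1) * E UNIV (\<lambda>j. lamF A $ j) k) * t ^ k)"
        by (rule sum_extend) (use E_top[of "UNIV :: 'm set" "\<lambda>j. lamF A $ j"] in \<open>auto simp: B_def cardM\<close>)
      finally show "(\<Sum>k\<le>B. a k (emb0 (ent A)) * t ^ k) = (\<Sum>k\<le>B. (F (mat 1) * E UNIV (\<lambda>j. lamF A $ j) k) * t ^ k)" .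
    qed
    from coeff_unique[OF this, of i] True have "a i (emb0 (ent A)) = F (mat 1) * E UNIV (\<lambda>j. lamF A $ j) i"
      by (simp add: B_def)
    then show ?thesis using True FI by (simp add: h_def)
  qed
  define \<Phi> where "\<Phi> y = Q (\<lambda>i. h i y)" for y
  have pf\<Phi>: "pf \<Phi>"
  proof -
    have "pf (h i)" for i
    proof -
      have "pf (\<lambda>y. a i (emb0 y))" using pf_emb0[of "a i"] Wd(1) by (simp add: emb0_def)
      then have "pf (\<lambda>y. if i \<le> M then a i (emb0 y) * (1 / F (mat 1)) else 0)"
        by (intro pf_if pf_mult pf_const)
      then show ?thesis by (simp add: h_def[abs_def])
    qed
    then have "pf (\<lambda>y. Q (\<lambda>i. h i y))" using pf_subst[of Q h] Q(1) by blast
    then show ?thesis by (simp add: \<Phi>_def[abs_def])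
  qed
  have PF\<Phi>: "p (lamF A) = \<Phi> (ent A)" if "sym_mat A" for A
  proof -
    have "p (lamF A) = Q (E UNIV (\<lambda>j. lamF A $ j))" using pp' Q by simp
    also have "E UNIV (\<lambda>j. lamF A $ j) = (\<lambda>i. h i (ent A))" using Eh[OF that] by (intro ext) simp
    finally show ?thesis by (simp add: \<Phi>_def)
  qed
  from pf_to_mpoly[OF pf\<Phi>] obtain c where c: "\<forall>y. \<Phi> y = mpoly_eval c y" by blast
  define c' where "c' = (\<Sum>m\<in>{m\<in>Poly_Mapping.keys c. deg m = K}. Poly_Mapping.single m (Poly_Mapping.lookup c m))"
  have c'h: "homog_mpoly K c'" unfolding c'_def by (rule homog_part_homog)
  have PFc': "p (lamF A) = mpoly_eval c' (\<lambda>(i,j). A $ i $ j)" if A: "sym_mat A" for A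
  proof -
    have sc: "\<forall>s. mpoly_eval c (\<lambda>v. s * ent A v) = s ^ K * mpoly_eval c (ent A)"
    proof
      fix s
      have "(\<lambda>v. s * ent A v) = ent (s *\<^sub>R A)" unfolding ent_def by (auto simp: fun_eq_iff)
      then have "mpoly_eval c (\<lambda>v. s * ent A v) = p (lamF (s *\<^sub>R A))"
        using PF\<Phi>[OF sym_mat_scale[OF A]] c by simp
      also have "\<dots> = s ^ K * p (lamF A)" by (rule L3[OF A])
      finally show "mpoly_eval c (\<lambda>v. s * ent A v) = s ^ K * mpoly_eval c (ent A)"
        using PF\<Phi>[OF A] c by simp
    qed
    have "mpoly_eval c' (ent A) = mpoly_eval c (ent A)" unfolding c'_def by (rule homog_part[OF sc])
    then show ?thesis using PF\<Phi>[OF A] c by (simp add: ent_def)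
  qed
  have hpoly: "homog_poly_on_Sym K (\<lambda>A. p (lamF A))"
    unfolding homog_poly_on_Sym_def using c'h PFc' by blast
  have contF: "continuous_on {A. sym_mat A} F"
  proof -
    have "continuous_on {A. sym_mat A} (\<lambda>A::real^'n^'n. mpoly_eval cF (\<lambda>(i,j). A $ i $ j))"
      by (rule mpoly_cont) (rule cont_ent)
    then show ?thesis by (rule continuous_on_cong[THEN iffD1, rotated 2]) (use cF in auto)
  qed
  have contP: "continuous_on {A. sym_mat A} (\<lambda>A. p (lamF A))"
  proof -
    have "continuous_on {A. sym_mat A} (\<lambda>A::real^'n^'n. mpoly_eval c' (\<lambda>(i,j). A $ i $ j))"
      by (rule mpoly_cont) (rule cont_ent)
    then show ?thesis by (rule continuous_on_cong[THEN iffD1, rotated 2]) (use PFc' in auto)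
  qed
  have contp: "continuous_on UNIV p"
  proof -
    have "continuous_on UNIV (\<lambda>x::real^'m. mpoly_eval cp (\<lambda>i. x $ i))"
      by (rule mpoly_cont) (intro continuous_intros)
    then show ?thesis using cp by simp
  qed
  have PFhom: "p (lamF (c *\<^sub>R A)) = c ^ K * p (lamF A)" if "sym_mat A" for c A
    using L3[OF that] .
  have PFI: "p (lamF (mat 1)) > 0" using L1 pe by simp
  have coneF: "garding_cone F = {A. sym_mat A \<and> (\<forall>j. lamF A $ j > 0)}"
  proof -
    have "connected_component_set {x. x \<in> {A. sym_mat A} \<and> F x \<noteq> 0} (mat 1) = {x \<in> {A. sym_mat A}. \<forall>j. lamF x $ j > 0}"
      by (rule cone_lemma[OF subspace_sym _ contF FI]) (use Fhom lamF_def sym_mat_1 in auto)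
    then show ?thesis by (simp add: garding_cone_def)
  qed
  have coneP: "garding_cone (\<lambda>A. p (lamF A)) = {A. sym_mat A \<and> (\<forall>j. Lam (lamF A) $ j > 0)}"
  proof -
    have "connected_component_set {x. x \<in> {A. sym_mat A} \<and> p (lamF x) \<noteq> 0} (mat 1) = {x \<in> {A. sym_mat A}. \<forall>j. (Lam (lamF x)) $ j > 0}"
      by (rule cone_lemma[where \<mu>="\<lambda>A. Lam (lamF A)", OF subspace_sym _ contP PFI]) (use PFhom conj2 sym_mat_1 in auto)
    then show ?thesis by (simp add: garding_cone_def)
  qed
  have conep: "garding_cone_vec p = {x. \<forall>j. Lam x $ j > 0}"
  proof -
    have "connected_component_set {x. x \<in> UNIV \<and> p x \<noteq> 0} (vec 1) = {x \<in> UNIV. \<forall>j. Lam x $ j > 0}"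
      by (rule cone_lemma[OF subspace_UNIV _ contp pe]) (use phom Lam_def in auto)
    then show ?thesis by (simp add: garding_cone_vec_def)
  qed
  have conj3: "garding_cone (\<lambda>A. p (lamF A)) = {A. sym_mat A \<and> lamF A \<in> garding_cone_vec p}"
    by (simp add: coneP conep)
  have ppos: "p y > 0" if y: "\<forall>i. y $ i > 0" for y
  proof -
    have ne: "Poly_Mapping.keys cp \<noteq> {}"
    proof
      assume "Poly_Mapping.keys cp = {}"
      then have "p (vec 1) = 0" using cp by (simp add: mpoly_eval_def)
      then show False using pe by simp
    qed
    have "mpoly_eval cp (\<lambda>i. y $ i) > 0"
      unfolding mpoly_eval_def
    proof (rule sum_pos[OF finite_keys ne])
      fix m assume m: "m \<in> Poly_Mapping.keys cp"
      then have "Poly_Mapping.lookup cp m > 0" using cp(2) by (metis in_keys_iff order_le_neq_trans)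
      moreover have "(\<Prod>v\<in>Poly_Mapping.keys m. y $ v ^ Poly_Mapping.lookup m v) > 0"
        using y by (intro prod_pos) auto
      ultimately show "Poly_Mapping.lookup cp m * (\<Prod>v\<in>Poly_Mapping.keys m. y $ v ^ Poly_Mapping.lookup m v) > 0"
        by simp
    qed
    then show ?thesis using cp by simp
  qed
  have posP: "\<forall>A. pos_def A \<longrightarrow> A \<in> garding_cone (\<lambda>A. p (lamF A))"
  proof (intro allI impI)
    fix A :: "real^'n^'n" assume pd: "pos_def A"
    then have A: "sym_mat A" by (simp add: pos_def_def)
    have lpos: "\<forall>j. lamF A $ j > 0" using posF pd coneF by blast
    have "\<forall>t\<ge>0. p (t *\<^sub>R vec 1 + lamF A) \<noteq> 0"
    proof (intro allI impI)
      fix t :: real assume "t \<ge> 0"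
      then have "\<forall>i. (t *\<^sub>R vec 1 + lamF A) $ i > 0" using lpos by (simp add: add_nonneg_pos)
      then show "p (t *\<^sub>R vec 1 + lamF A) \<noteq> 0" using ppos by (metis less_irrefl)
    qed
    then have "\<forall>j. Lam (lamF A) $ j > 0"
      using cone_char[where f=p and e="vec 1" and x="lamF A" and \<mu>=Lam, OF pe] Lam_def by blast
    then show "A \<in> garding_cone (\<lambda>A. p (lamF A))" using coneP A by blast
  qed
  have hyp: "\<forall>A q. sym_mat A \<and> (\<forall>t. poly q t = p (lamF (t *\<^sub>R mat 1 + A))) \<longrightarrow> only_real_roots q"
  proof (intro allI impI)
    fix A q assume Aq: "sym_mat A \<and> (\<forall>t. poly q t = p (lamF (t *\<^sub>R mat 1 + A)))"
    show "only_real_roots q"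
      by (rule real_roots_prod[where S=UNIV and c="p (lamF (mat 1))" and r="\<lambda>j. Lam (lamF A) $ j"])
        (use Aq conj2 PFI in auto)
  qed
  have GD: "GD_poly K (\<lambda>A. p (lamF A))"
    unfolding GD_poly_def using hpoly PFI hyp posP by blast
  have inv: "real_invariant (\<lambda>A. p (lamF A))" if RI: "real_invariant F"
    unfolding real_invariant_def
  proof (intro allI impI)
    fix g A :: "real^'n^'n" assume gA: "orthogonal_matrix g \<and> sym_mat A"
    then have og: "g ** transpose g = mat 1" by (simp add: orthogonal_matrix_def)
    have A: "sym_mat A" using gA by simp
    have symg: "sym_mat (g ** A ** transpose g)"
      using A by (simp add: sym_mat_def matrix_transpose_mul matrix_mul_assoc)
    show "p (lamF (g ** A ** transpose g)) = p (lamF A)"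
    proof (rule KL, rule allI)
      fix t :: real
      have "g ** (t *\<^sub>R mat 1 + A) ** transpose g = t *\<^sub>R mat 1 + g ** A ** transpose g"
      proof -
        have "g ** (t *\<^sub>R mat 1 + A) ** transpose g = (t *\<^sub>R g + g ** A) ** transpose g"
          by (simp add: matrix_add_ldistrib matrix_scalar_ac)
        also have "\<dots> = transpose (g ** transpose (t *\<^sub>R g + g ** A))"
          by (simp add: matrix_transpose_mul)
        also have "transpose (t *\<^sub>R g + g ** A) = t *\<^sub>R transpose g + transpose A ** transpose g"
          by (simp add: transpose_add_mat transpose_scalar matrix_transpose_mul)
        also have "g ** (t *\<^sub>R transpose g + transpose A ** transpose g) = t *\<^sub>R mat 1 + g ** A ** transpose g"
          using A og by (simp add: matrix_add_ldistrib matrix_scalar_ac matrix_mul_assoc sym_mat_def scalar_matrix_assoc[symmetric])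
        also have "transpose (t *\<^sub>R mat 1 + g ** A ** transpose g) = t *\<^sub>R mat 1 + g ** A ** transpose g"
          using symg sym_mat_shift unfolding sym_mat_def by blast
        finally show ?thesis .
      qed
      then have "F (t *\<^sub>R mat 1 + g ** A ** transpose g) = F (t *\<^sub>R mat 1 + A)"
        using RI sym_mat_shift[OF A] gA unfolding real_invariant_def by metis
      then show "(\<Prod>j\<in>UNIV. t + lamF (g ** A ** transpose g) $ j) = (\<Prod>j\<in>UNIV. t + lamF A $ j)"
        using lamF_def A symg FI by simp
    qed
  qed
  show ?thesis using GD conj2 conj3 inv by (simp add: K_def)
qed


end
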